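(* Let $0<s<1$ and $\phi\in B$. The operator $T_\phi$ defined by $$T_\phi w(x)=[\Lambda^s,\phi]w(x)=\Lambda^s(\phi w)(x)-\phi(x)\Lambda^s w(x)=C_s\int_{\mathbb{R}^2}\frac{(\phi(x)-\phi(y))\,w(y)}{|x-y|^{2+s}}\,dy$$ is continuous from $L^2_{uloc}(\mathbb{R}^2)$ to $L^2_{uloc}(\mathbb{R}^2)$.
   Context: $\Lambda^s f(x)=C_s\,\mathrm{P.V.}\int\frac{f(x)-f(y)}{|x-y|^{2+s}}dy$. Fix smooth $\phi_0$ with $0\le\phi_0\le1$, $\phi_0=1$ on $|x|\le2$, $\phi_0=0$ on $|x|\ge3$, and $B=\{\phi_0(\cdot-k):k\in\mathbb{Z}^2\}$. $L^2_{uloc}$ is the space of $f\in L^2_{loc}$ with $\|f\|_{L^2_{uloc}}=\sup_{\phi\in B}\|\phi f\|_{L^2}<\infty$. *)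

theory Defs
  imports "HOL-Analysis.Analysis"
begin

definition pdiff2 :: "2 \<Rightarrow> (real^2 \<Rightarrow> real) \<Rightarrow> real^2 \<Rightarrow> real" where
  "pdiff2 i f x = deriv (\<lambda>t. f (x + t *\<^sub>R axis i 1)) 0"

definition smooth2 :: "(real^2 \<Rightarrow> real) \<Rightarrow> bool" where
  "smooth2 f \<longleftrightarrow> (\<forall>is :: 2 list. (foldr pdiff2 is f) differentiable_on UNIV)"

text \<open>Normalising constant of the fractional Laplacian in dimension 2.\<close>
definition frac_const :: "real \<Rightarrow> real" where
  "frac_const s = 2 powr s * Gamma (1 + s / 2) / (pi * \<bar>Gamma (- s / 2)\<bar>)"

definition Bset :: "(real^2 \<Rightarrow> real) \<Rightarrow> (real^2 \<Rightarrow> real) set" where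
  "Bset \<phi>0 = {(\<lambda>x. \<phi>0 (x - k)) | k :: real^2. \<forall>i. k $ i \<in> \<int>}"

definition L2loc :: "(real^2 \<Rightarrow> real) set" where
  "L2loc = {f. f \<in> borel_measurable lebesgue \<and>
      (\<forall>K. compact K \<longrightarrow> set_integrable lebesgue K (\<lambda>x. (f x)\<^sup>2))}"

definition l2norm :: "(real^2 \<Rightarrow> real) \<Rightarrow> real" where
  "l2norm f = sqrt (LINT x|lebesgue. (f x)\<^sup>2)"

definition L2uloc :: "(real^2 \<Rightarrow> real) \<Rightarrow> (real^2 \<Rightarrow> real) set" where
  "L2uloc \<phi>0 = {f \<in> L2loc. bdd_above ((\<lambda>\<phi>. l2norm (\<lambda>x. \<phi> x * f x)) ` Bset \<phi>0)}"

definition uloc_norm :: "(real^2 \<Rightarrow> real) \<Rightarrow> (real^2 \<Rightarrow> real) \<Rightarrow> real" where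
  "uloc_norm \<phi>0 f = (SUP \<phi>\<in>Bset \<phi>0. l2norm (\<lambda>x. \<phi> x * f x))"

definition Tcomm :: "real \<Rightarrow> (real^2 \<Rightarrow> real) \<Rightarrow> (real^2 \<Rightarrow> real) \<Rightarrow> real^2 \<Rightarrow> real" where
  "Tcomm s \<phi> w x = frac_const s *
     (LINT y|lebesgue. (\<phi> x - \<phi> y) * w y / norm (x - y) powr (2 + s))"

end

theory Submission
  imports Defs
begin

lemma pdiff2_eq:
  assumes "(f has_derivative D) (at x)"
  shows "pdiff2 i f x = D (axis i 1)"
proof -
  have g: "((\<lambda>t::real. x + t *\<^sub>R axis i 1) has_derivative (\<lambda>t. t *\<^sub>R axis i 1)) (at 0)"
    by (auto intro!: derivative_eq_intros)
  have "((\<lambda>t. f (x + t *\<^sub>R axis i 1)) has_derivative (\<lambda>t. D (t *\<^sub>R axis i 1))) (at 0)"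
    using has_derivative_compose[OF g, of f D] assms by simp
  moreover have "(\<lambda>t. D (t *\<^sub>R axis i 1)) = (\<lambda>t. D (axis i 1) * t)"
    using has_derivative_linear[OF assms] by (simp add: linear_scale mult.commute)
  ultimately have "((\<lambda>t. f (x + t *\<^sub>R axis i 1)) has_field_derivative D (axis i 1)) (at 0)"
    by (simp add: has_field_derivative_def)
  then show ?thesis unfolding pdiff2_def by (rule DERIV_imp_deriv)
qed

lemma vec2_expand: "(h::real^2) = h$1 *\<^sub>R axis 1 1 + h$2 *\<^sub>R axis 2 1"
  by (simp add: vec_eq_iff forall_2 axis_def)

lemma pdiff_zero_out:
  assumes z: "\<forall>x. norm x \<ge> 3 \<longrightarrow> f x = 0" and x: "norm x > 3"
  shows "pdiff2 i f x = 0"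
proof -
  define r where "r = norm x - 3"
  have r: "r > 0" using x r_def by simp
  have "((\<lambda>t::real. 0::real) has_field_derivative 0) (at 0)" by simp
  then have "((\<lambda>t. f (x + t *\<^sub>R axis i 1)) has_field_derivative 0) (at 0)"
  proof (rule has_field_derivative_transform_within_open[where S="ball 0 r"])
    show "open (ball (0::real) r)" by simp
    show "(0::real) \<in> ball 0 r" using r by simp
    fix t :: real assume "t \<in> ball 0 r"
    then have t: "\<bar>t\<bar> < r" by simp
    have "norm (t *\<^sub>R axis i (1::real)) = \<bar>t\<bar>" by simp
    then have "norm (x + t *\<^sub>R axis i 1) \<ge> norm x - \<bar>t\<bar>"
      using norm_diff_ineq[of x "t *\<^sub>R axis i 1"] by simp
    then have "norm (x + t *\<^sub>R axis i 1) \<ge> 3" using t r_def by simp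
    then show "0 = f (x + t *\<^sub>R axis i 1)" using z by simp
  qed
  then show ?thesis unfolding pdiff2_def by (rule DERIV_imp_deriv)
qed

lemma pdiff_bounded:
  assumes sm: "smooth2 f" and z: "\<forall>x. norm x \<ge> 3 \<longrightarrow> f x = 0"
  shows "\<exists>M. \<forall>x. \<bar>pdiff2 i f x\<bar> \<le> M"
proof -
  have "pdiff2 i f differentiable_on UNIV"
    using sm[unfolded smooth2_def, rule_format, of "[i]"] by simp
  then have "continuous_on UNIV (pdiff2 i f)" by (rule differentiable_imp_continuous_on)
  then have "continuous_on (cball 0 3) (pdiff2 i f)" by (rule continuous_on_subset) simp
  then have "compact (pdiff2 i f ` cball 0 3)" by (rule compact_continuous_image) simp
  then obtain M where M: "\<forall>y\<in>pdiff2 i f ` cball 0 3. norm y \<le> M"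
    using compact_imp_bounded bounded_iff by metis
  show ?thesis
  proof (intro exI allI)
    fix x
    show "\<bar>pdiff2 i f x\<bar> \<le> M"
    proof (cases "norm x \<le> 3")
      case True then show ?thesis using M by auto
    next
      case False then have "pdiff2 i f x = 0" using pdiff_zero_out[OF z] by simp
      moreover have "norm (pdiff2 i f 0) \<le> M" using M by simp
      then have "0 \<le> M" using norm_ge_zero[of "pdiff2 i f 0"] by linarith
      ultimately show ?thesis by simp
    qed
  qed
qed

lemma phi0_lip:
  assumes sm: "smooth2 f" and z: "\<forall>x. norm x \<ge> 3 \<longrightarrow> f x = 0"
  shows "\<exists>B\<ge>0. \<forall>x y. \<bar>f x - f y\<bar> \<le> B * norm (x - y)"
proof -
  obtain M1 where M1: "\<forall>x. \<bar>pdiff2 1 f x\<bar> \<le> M1" using pdiff_bounded[OF sm z] by blast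
  obtain M2 where M2: "\<forall>x. \<bar>pdiff2 2 f x\<bar> \<le> M2" using pdiff_bounded[OF sm z] by blast
  have d0: "f differentiable_on UNIV"
    using sm[unfolded smooth2_def, rule_format, of "[]"] by simp
  define D where "D x = frechet_derivative f (at x)" for x
  have hd: "(f has_derivative D x) (at x)" for x
    using d0 unfolding D_def differentiable_on_def
    by (simp add: frechet_derivative_works[symmetric])
  have on: "onorm (D x) \<le> M1 + M2" for x
  proof (rule onorm_le)
    fix h :: "real^2"
    have lin: "linear (D x)" using has_derivative_linear[OF hd] .
    have "D x h = h$1 * D x (axis 1 1) + h$2 * D x (axis 2 1)"
      by (subst vec2_expand) (simp add: linear_add[OF lin] linear_scale[OF lin])
    also have "D x (axis 1 1) = pdiff2 1 f x" using pdiff2_eq[OF hd] by simp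
    also have "D x (axis 2 1) = pdiff2 2 f x" using pdiff2_eq[OF hd] by simp
    finally have e: "D x h = h$1 * pdiff2 1 f x + h$2 * pdiff2 2 f x" .
    have "\<bar>h$1 * pdiff2 1 f x\<bar> \<le> M1 * norm h"
      using mult_mono[OF component_le_norm_cart[of h 1] M1[rule_format, of x]] by (simp add: abs_mult mult.commute)
    moreover have "\<bar>h$2 * pdiff2 2 f x\<bar> \<le> M2 * norm h"
      using mult_mono[OF component_le_norm_cart[of h 2] M2[rule_format, of x]] by (simp add: abs_mult mult.commute)
    ultimately show "norm (D x h) \<le> (M1 + M2) * norm h"
      unfolding e real_norm_def by (simp add: distrib_right)
  qed
  have B: "\<bar>f x - f y\<bar> \<le> (M1 + M2) * norm (x - y)" for x y
    using differentiable_bound[of UNIV f D "M1+M2" x y] hd on by simp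
  have "0 \<le> M1 + M2" using M1[rule_format, of 0] M2[rule_format, of 0] by linarith
  with B show ?thesis by blast
qed


lemma emeasure_cball_le:
  assumes r: "r \<ge> 0"
  shows "emeasure lborel (cball (c::real^2) r) \<le> ennreal ((2*r)^2)"
proof -
  have sub: "cball c r \<subseteq> cbox (c - r *\<^sub>R 1) (c + r *\<^sub>R 1)"
  proof
    fix x assume "x \<in> cball c r"
    then have "norm (x - c) \<le> r" by (simp add: dist_norm norm_minus_commute)
    then have "\<bar>(x - c)$i\<bar> \<le> r" for i using component_le_norm_cart[of "x-c" i] by linarith
    then show "x \<in> cbox (c - r *\<^sub>R 1) (c + r *\<^sub>R 1)"
      by (simp add: mem_box_cart abs_le_iff algebra_simps)
  qed
  have B: "(Basis::(real^2) set) = {axis 1 1, axis 2 1}"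
    unfolding Basis_vec_def by (auto, metis exhaust_2)
  have ne: "axis 1 (1::real) \<noteq> (axis 2 1 :: real^2)" by (simp add: axis_eq_axis)
  have "emeasure lborel (cbox (c - r *\<^sub>R 1) (c + r *\<^sub>R 1)) = ennreal ((2*r)^2)"
    using r ne by (simp add: emeasure_lborel_cbox_eq B inner_axis power2_eq_square)
  then show ?thesis using emeasure_mono[OF sub, of lborel] by simp
qed

lemma ennreal_term_le_suminf: "(f::nat\<Rightarrow>ennreal) n \<le> suminf f"
  using sum_le_suminf[of f "{n}"] by (simp add: summableI)

definition gk :: "real \<Rightarrow> real \<Rightarrow> real^2 \<Rightarrow> real" where
  "gk L s z = (if z = 0 then 0 else if norm z < 1 then L * norm z powr (-1-s) else norm z powr (-2-s))"

lemma gk_nonneg: "L \<ge> 0 \<Longrightarrow> gk L s z \<ge> 0"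
  by (simp add: gk_def)

lemma gk_measurable[measurable]: "gk L s \<in> borel_measurable borel"
  unfolding gk_def by measurable

lemma gk_inner_pt:
  assumes L: "L \<ge> 0" and s: "0 < s" and z: "z \<noteq> 0" "norm z < 1"
  shows "\<exists>n::nat. norm z \<le> 2 powr (-real n) \<and>
            gk L s z \<le> L * (2 powr (-real n - 1)) powr (-1-s)"
proof -
  define k where "k = \<lfloor>log 2 (norm z)\<rfloor>"
  have nz: "norm z > 0" using z by simp
  have k: "2 powr real_of_int k \<le> norm z \<and> norm z < 2 powr real_of_int (k+1)"
    using floor_log_eq_powr_iff[OF nz, of 2 k] k_def by simp
  have "k < 0"
  proof (rule ccontr)
    assume "\<not> k < 0"
    then have "(1::real) \<le> 2 powr real_of_int k" by (intro ge_one_powr_ge_zero) auto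
    then show False using k z by linarith
  qed
  define n where "n = nat (-k-1)"
  have kn: "real_of_int k = -real n - 1" using \<open>k<0\<close> n_def by simp
  have "norm z \<le> 2 powr (-real n)" using k kn by simp
  moreover have "norm z powr (-1-s) \<le> (2 powr (-real n - 1)) powr (-1-s)"
    using k kn s by (intro powr_mono2') auto
  then have "gk L s z \<le> L * (2 powr (-real n - 1)) powr (-1-s)"
    using z L by (simp add: gk_def mult_left_mono)
  ultimately show ?thesis by blast
qed

lemma gk_outer_pt:
  assumes L: "L \<ge> 0" and s: "0 < s" and z: "\<not> norm z < 1"
  shows "\<exists>n::nat. norm z \<le> 2 powr (real n + 1) \<and>
            gk L s z \<le> (2 powr (real n)) powr (-2-s)"
proof -
  define k where "k = \<lfloor>log 2 (norm z)\<rfloor>"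
  have nz: "norm z > 0" using z by linarith
  have k: "2 powr real_of_int k \<le> norm z \<and> norm z < 2 powr real_of_int (k+1)"
    using floor_log_eq_powr_iff[OF nz, of 2 k] k_def by simp
  have "k \<ge> 0"
  proof (rule ccontr)
    assume "\<not> k \<ge> 0"
    then have "k + 1 \<le> 0" by simp
    then have "real_of_int k + 1 \<le> 0" by linarith
    then have "2 powr (real_of_int k + 1) \<le> 2 powr 0" by (intro powr_mono) auto
    then have "2 powr real_of_int (k+1) \<le> 1" by simp
    then show False using k z by linarith
  qed
  define n where "n = nat k"
  have kn: "real_of_int k = real n" using \<open>k\<ge>0\<close> n_def by simp
  have "norm z \<le> 2 powr (real n + 1)" using k kn by simp
  moreover have "norm z powr (-2-s) \<le> (2 powr (real n)) powr (-2-s)"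
    using k kn s by (intro powr_mono2') auto
  then have "gk L s z \<le> (2 powr (real n)) powr (-2-s)"
    using z nz by (auto simp add: gk_def)
  ultimately show ?thesis by blast
qed


lemma pow_id1: "(2 powr (-real n - 1)) powr (-1-s) * (2*2 powr (-real n))^2
      = 4 * 2 powr (1+s) * (2 powr (s-1))^n"
proof -
  have "(2 powr (-real n - 1)) powr (-1-s) = 2 powr ((real n + 1) * (1+s))"
    by (simp add: powr_powr algebra_simps)
  moreover have "(2*2 powr (-real n))^2 = 4 * 2 powr (-2 * real n)"
    by (simp add: power2_eq_square powr_add[symmetric])
  moreover have "(2 powr (s-1))^n = 2 powr (real n * (s-1))"
    by (simp add: powr_realpow[symmetric] powr_powr mult.commute)
  ultimately show ?thesis
    by (simp add: powr_add[symmetric] algebra_simps)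
qed

lemma pow_id2: "(2 powr (real n)) powr (-2-s) * (2*2 powr (real n + 1))^2
      = 16 * (2 powr (-s))^n"
proof -
  have "(2 powr (real n)) powr (-2-s) = 2 powr (real n * (-2-s))"
    by (simp add: powr_powr)
  moreover have "(2*2 powr (real n + 1))^2 = 16 * 2 powr (2 * real n)"
    by (simp add: power2_eq_square powr_add[symmetric] algebra_simps) (simp add: powr_add)
  moreover have "(2 powr (-s))^n = 2 powr (real n * (-s))"
    by (simp add: powr_realpow[symmetric] powr_powr mult.commute)
  ultimately show ?thesis
    by (simp add: powr_add[symmetric] algebra_simps)
qed

lemma gk_integral_finite:
  assumes L: "L \<ge> 0" and s: "0 < s" "s < 1"
  shows "(\<integral>\<^sup>+ z. ennreal (gk L s z) \<partial>lborel) < \<infinity>"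
proof -
  define a where "a n = L * (2 powr (-real n - 1)) powr (-1-s)" for n :: nat
  define ra where "ra n = 2 powr (-real n)" for n :: nat
  define b where "b n = (2 powr (real n)) powr (-2-s)" for n :: nat
  define rb where "rb n = 2 powr (real n + 1)" for n :: nat
  define F1 where "F1 z = (\<Sum>n. ennreal (a n) * indicator (cball 0 (ra n)) z)" for z :: "real^2"
  define F2 where "F2 z = (\<Sum>n. ennreal (b n) * indicator (cball 0 (rb n)) z)" for z :: "real^2"
  have pt: "ennreal (gk L s z) \<le> F1 z + F2 z" for z
  proof (cases "z = 0")
    case True then show ?thesis by (simp add: gk_def)
  next
    case False
    show ?thesis
    proof (cases "norm z < 1")
      case True
      then obtain n where n: "norm z \<le> ra n" "gk L s z \<le> a n"
        using gk_inner_pt[OF L s(1) False True] unfolding a_def ra_def by blast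
      have "ennreal (gk L s z) \<le> ennreal (a n) * indicator (cball 0 (ra n)) z"
        using n by (simp add: ennreal_leI)
      also have "\<dots> \<le> F1 z" unfolding F1_def by (rule ennreal_term_le_suminf)
      finally show ?thesis by (simp add: add_increasing2)
    next
      case nt: False
      then obtain n where n: "norm z \<le> rb n" "gk L s z \<le> b n"
        using gk_outer_pt[OF L s(1) nt] unfolding b_def rb_def by blast
      have "ennreal (gk L s z) \<le> ennreal (b n) * indicator (cball 0 (rb n)) z"
        using n by (simp add: ennreal_leI)
      also have "\<dots> \<le> F2 z" unfolding F2_def by (rule ennreal_term_le_suminf)
      finally show ?thesis by (simp add: add_increasing)
    qed
  qed
  have trm: "(\<integral>\<^sup>+ z. ennreal c * indicator (cball (0::real^2) r) z \<partial>lborel) \<le> ennreal (c * (2*r)^2)"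
    if "c \<ge> 0" "r \<ge> 0" for c r :: real
  proof -
    have "(\<integral>\<^sup>+ z. ennreal c * indicator (cball (0::real^2) r) z \<partial>lborel)
        = ennreal c * emeasure lborel (cball (0::real^2) r)"
      by (simp add: nn_integral_cmult_indicator)
    also have "\<dots> \<le> ennreal c * ennreal ((2*r)^2)"
      by (intro mult_left_mono emeasure_cball_le that) auto
    finally show ?thesis using that by (simp add: ennreal_mult)
  qed
  have a0: "a n \<ge> 0" for n using L by (simp add: a_def)
  have b0: "b n \<ge> 0" for n by (simp add: b_def)
  have sum1: "summable (\<lambda>n. a n * (2 * ra n)^2)"
  proof -
    have "(\<lambda>n. a n * (2 * ra n)^2) = (\<lambda>n. L * (4 * 2 powr (1+s)) * (2 powr (s-1))^n)"
      using pow_id1 by (simp add: a_def ra_def fun_eq_iff mult.assoc)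
    moreover have "summable (\<lambda>n. (2 powr (s-1))^n)"
    proof (rule summable_geometric)
      have "2 powr (s-1) < 2 powr 0" using s by (intro powr_less_mono) auto
      then show "norm (2 powr (s-1)) < 1" by simp
    qed
    ultimately show ?thesis by (simp add: summable_mult)
  qed
  have sum2: "summable (\<lambda>n. b n * (2 * rb n)^2)"
  proof -
    have "(\<lambda>n. b n * (2 * rb n)^2) = (\<lambda>n. 16 * (2 powr (-s))^n)"
      using pow_id2 by (simp add: b_def rb_def fun_eq_iff)
    moreover have "summable (\<lambda>n. (2 powr (-s))^n)"
    proof (rule summable_geometric)
      have "2 powr (-s) < 2 powr 0" using s by (intro powr_less_mono) auto
      then show "norm (2 powr (-s)) < 1" by simp
    qed
    ultimately show ?thesis by (simp add: summable_mult)
  qed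
  have mi: "(\<lambda>z::real^2. ennreal c * indicator (cball 0 r) z) \<in> borel_measurable borel" for c r
    by (intro borel_measurable_times_ennreal borel_measurable_indicator borel_measurable_const) simp
  have i1: "(\<integral>\<^sup>+ z. F1 z \<partial>lborel) < \<infinity>"
  proof -
    have "(\<integral>\<^sup>+ z. F1 z \<partial>lborel) = (\<Sum>n. \<integral>\<^sup>+ z. ennreal (a n) * indicator (cball (0::real^2) (ra n)) z \<partial>lborel)"
      unfolding F1_def using nn_integral_suminf[of "\<lambda>n z. ennreal (a n) * indicator (cball (0::real^2) (ra n)) z" lborel] mi by simp
    also have "\<dots> \<le> (\<Sum>n. ennreal (a n * (2 * ra n)^2))"
      using trm a0 by (intro suminf_le) (auto simp: ra_def summableI)
    also have "\<dots> = ennreal (\<Sum>n. a n * (2 * ra n)^2)"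
      using sum1 a0 by (intro suminf_ennreal2) auto
    finally show ?thesis using le_less_trans by fastforce
  qed
  have i2: "(\<integral>\<^sup>+ z. F2 z \<partial>lborel) < \<infinity>"
  proof -
    have "(\<integral>\<^sup>+ z. F2 z \<partial>lborel) = (\<Sum>n. \<integral>\<^sup>+ z. ennreal (b n) * indicator (cball (0::real^2) (rb n)) z \<partial>lborel)"
      unfolding F2_def using nn_integral_suminf[of "\<lambda>n z. ennreal (b n) * indicator (cball (0::real^2) (rb n)) z" lborel] mi by simp
    also have "\<dots> \<le> (\<Sum>n. ennreal (b n * (2 * rb n)^2))"
      using trm b0 by (intro suminf_le) (auto simp: rb_def summableI)
    also have "\<dots> = ennreal (\<Sum>n. b n * (2 * rb n)^2)"
      using sum2 b0 by (intro suminf_ennreal2) auto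
    finally show ?thesis using le_less_trans by fastforce
  qed
  have "(\<integral>\<^sup>+ z. ennreal (gk L s z) \<partial>lborel) \<le> (\<integral>\<^sup>+ z. F1 z + F2 z \<partial>lborel)"
    by (intro nn_integral_mono pt)
  also have "\<dots> = (\<integral>\<^sup>+ z. F1 z \<partial>lborel) + (\<integral>\<^sup>+ z. F2 z \<partial>lborel)"
  proof (rule nn_integral_add)
    show "F1 \<in> borel_measurable lborel" unfolding F1_def measurable_lborel2
      by (rule borel_measurable_suminf_order) (rule mi)
    show "F2 \<in> borel_measurable lborel" unfolding F2_def measurable_lborel2
      by (rule borel_measurable_suminf_order) (rule mi)
  qed
  finally show ?thesis using i1 i2
    by (metis (no_types, lifting) ennreal_add_eq_top infinity_ennreal_def le_less_trans less_top)
qed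


lemma int_decode_bound: "real n + 1 \<le> 2 * (1 + \<bar>real_of_int (int_decode n)\<bar>)"
  unfolding int_decode_def sum_decode_def by (cases "even n") (auto elim!: evenE oddE)

lemma sum_int_finite:
  assumes p: "p > 1"
  shows "(\<integral>\<^sup>+ a. ennreal ((1 + \<bar>real_of_int a\<bar>) powr (-p)) \<partial>count_space (UNIV::int set)) < \<infinity>"
proof -
  have "(\<integral>\<^sup>+ a. ennreal ((1 + \<bar>real_of_int a\<bar>) powr (-p)) \<partial>count_space (UNIV::int set))
     = (\<integral>\<^sup>+ n. ennreal ((1 + \<bar>real_of_int (int_decode n)\<bar>) powr (-p)) \<partial>count_space UNIV)"
    using nn_integral_bij_count_space[OF bij_int_decode, of "\<lambda>a. ennreal ((1 + \<bar>real_of_int a\<bar>) powr (-p))"]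
    by simp
  also have "\<dots> = (\<Sum>n. ennreal ((1 + \<bar>real_of_int (int_decode n)\<bar>) powr (-p)))"
    by (simp add: nn_integral_count_space_nat)
  also have "\<dots> \<le> (\<Sum>n. ennreal (2 powr p * (real n + 1) powr (-p)))"
  proof (intro suminf_le summableI ennreal_leI)
    fix n
    have "(1 + \<bar>real_of_int (int_decode n)\<bar>) powr (-p) \<le> ((real n + 1) / 2) powr (-p)"
      using int_decode_bound[of n] p by (intro powr_mono2') auto
    also have "\<dots> = 2 powr p * (real n + 1) powr (-p)"
      by (simp add: powr_divide powr_minus divide_simps)
    finally show "(1 + \<bar>real_of_int (int_decode n)\<bar>) powr (-p) \<le> 2 powr p * (real n + 1) powr (-p)" .
  qed
  also have "\<dots> = ennreal (\<Sum>n. 2 powr p * (real n + 1) powr (-p))"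
  proof (rule suminf_ennreal2)
    show "\<And>n. 0 \<le> 2 powr p * (real n + 1) powr (-p)" by simp
    have "summable (\<lambda>n. real n powr (-p))" using p by (simp add: summable_real_powr_iff)
    then have "summable (\<lambda>n. real (Suc n) powr (-p))" by (subst summable_Suc_iff)
    then have "summable (\<lambda>n. (real n + 1) powr (-p))" by (simp add: add.commute)
    then show "summable (\<lambda>n. 2 powr p * (real n + 1) powr (-p))" by (rule summable_mult)
  qed
  finally show ?thesis using le_less_trans by fastforce
qed

definition rhot :: "real \<Rightarrow> int \<times> int \<Rightarrow> real" where
  "rhot p m = ((1 + \<bar>real_of_int (fst m)\<bar>) * (1 + \<bar>real_of_int (snd m)\<bar>)) powr (-p)"

lemma sum_rhot_finite:
  assumes p: "p > 1"
  shows "(\<integral>\<^sup>+ m. ennreal (rhot p m) \<partial>count_space UNIV) < \<infinity>"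
proof -
  define A where "A = (\<integral>\<^sup>+ a. ennreal ((1 + \<bar>real_of_int a\<bar>) powr (-p)) \<partial>count_space (UNIV::int set))"
  have rs: "ennreal (rhot p (a,b)) = ennreal ((1 + \<bar>real_of_int a\<bar>) powr (-p)) * ennreal ((1 + \<bar>real_of_int b\<bar>) powr (-p))" for a b
    by (simp add: rhot_def powr_mult ennreal_mult)
  have "(\<integral>\<^sup>+ m. ennreal (rhot p m) \<partial>count_space UNIV)
      = (\<integral>\<^sup>+ a. \<integral>\<^sup>+ b. ennreal (rhot p (a,b)) \<partial>count_space UNIV \<partial>count_space UNIV)"
    by (rule nn_integral_fst_count_space[symmetric])
  also have "\<dots> = (\<integral>\<^sup>+ a. ennreal ((1 + \<bar>real_of_int a\<bar>) powr (-p)) * A \<partial>count_space UNIV)"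
    unfolding rs A_def by (simp add: nn_integral_cmult)
  also have "\<dots> = A * A" unfolding A_def by (simp add: nn_integral_multc)
  finally show ?thesis using sum_int_finite[OF p] unfolding A_def
    by (simp add: ennreal_mult_less_top)
qed

lemma sum_rhot_shift:
  "(\<integral>\<^sup>+ m. ennreal (rhot p (fst m - fst j, snd m - snd j)) \<partial>count_space UNIV)
   = (\<integral>\<^sup>+ m. ennreal (rhot p m) \<partial>count_space UNIV)"
proof -
  have "bij_betw (\<lambda>m::int\<times>int. (fst m - fst j, snd m - snd j)) UNIV UNIV"
    by (rule bij_betwI[where g="\<lambda>m. (fst m + fst j, snd m + snd j)"]) auto
  from nn_integral_bij_count_space[OF this, of "\<lambda>m. ennreal (rhot p m)"] show ?thesis by simp
qed


definition latt :: "int \<times> int \<Rightarrow> real^2" where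
  "latt m = (\<chi> i. if i = 1 then real_of_int (fst m) else real_of_int (snd m))"

lemma latt_comp[simp]: "latt m $ 1 = real_of_int (fst m)" "latt m $ 2 = real_of_int (snd m)"
  by (simp_all add: latt_def)

lemma norm2_le: "norm (x::real^2) \<le> \<bar>x$1\<bar> + \<bar>x$2\<bar>"
proof -
  have "norm x = norm (x$1 *\<^sub>R axis 1 (1::real) + x$2 *\<^sub>R axis 2 1 :: real^2)"
    by (rule arg_cong[where f=norm, OF vec2_expand])
  also have "\<dots> \<le> norm (x$1 *\<^sub>R axis 1 (1::real) :: real^2) + norm (x$2 *\<^sub>R axis 2 (1::real) :: real^2)"
    by (rule norm_triangle_ineq)
  finally show ?thesis by simp
qed

lemma count_single_le:
  "f m0 \<le> (\<integral>\<^sup>+ m. f m \<partial>count_space UNIV)"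
proof -
  have "(\<integral>\<^sup>+ m. f m \<partial>count_space UNIV) \<ge> (\<integral>\<^sup>+ m. f m0 * indicator {m0} m \<partial>count_space UNIV)"
    by (intro nn_integral_mono) (auto split: split_indicator)
  moreover have "(\<integral>\<^sup>+ m. f m0 * indicator {m0} m \<partial>count_space UNIV) = f m0"
    by (simp add: nn_integral_cmult_indicator)
  ultimately show ?thesis by simp
qed

lemma weight_pt:
  assumes s: "s > 0" and one: "\<forall>x. norm x \<le> 2 \<longrightarrow> f0 x = 1"
    and that: "m0 = (\<lfloor>y$1\<rfloor>, \<lfloor>y$2\<rfloor>)"
  shows "(2 + norm (y - latt j)) powr (-2-s) \<le> rhot (1 + s/2) (fst m0 - fst j, snd m0 - snd j) * (f0 (y - latt m0))^2"
proof -
  have c1: "0 \<le> (y - latt m0)$1 \<and> (y - latt m0)$1 < 1" using that by (simp, linarith)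
  have c2: "0 \<le> (y - latt m0)$2 \<and> (y - latt m0)$2 < 1" using that by (simp, linarith)
  have "norm (y - latt m0) \<le> 2" using norm2_le[of "y - latt m0"] c1 c2 by linarith
  then have f1: "f0 (y - latt m0) = 1" using one by simp
  define N where "N = norm (y - latt j)"
  have a: "1 + \<bar>real_of_int (fst m0 - fst j)\<bar> \<le> 2 + N"
  proof -
    have "\<bar>(y - latt j)$1\<bar> \<le> N" unfolding N_def by (rule component_le_norm_cart)
    then show ?thesis using that by (simp, linarith)
  qed
  have b: "1 + \<bar>real_of_int (snd m0 - snd j)\<bar> \<le> 2 + N"
  proof -
    have "\<bar>(y - latt j)$2\<bar> \<le> N" unfolding N_def by (rule component_le_norm_cart)
    then show ?thesis using that by (simp, linarith)
  qed
  have N0: "N \<ge> 0" unfolding N_def by simp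
  have "((2+N)*(2+N)) powr (-(1+s/2)) = (2+N) powr (-(1+s/2)) * (2+N) powr (-(1+s/2))"
    using N0 by (simp add: powr_mult)
  also have "\<dots> = (2+N) powr (-(1+s/2) + -(1+s/2))" by (rule powr_add[symmetric])
  also have "\<dots> = (2+N) powr (-2-s)" by (simp add: algebra_simps)
  finally have "(2 + N) powr (-2-s) = ((2+N)*(2+N)) powr (-(1+s/2))" by simp
  also have "\<dots> \<le> ((1 + \<bar>real_of_int (fst m0 - fst j)\<bar>) * (1 + \<bar>real_of_int (snd m0 - snd j)\<bar>)) powr (-(1+s/2))"
    using a b s by (intro powr_mono2') (auto intro!: mult_mono)
  finally show ?thesis using f1 by (simp add: rhot_def N_def)
qed


lemma pair_sf_count_lborel: "pair_sigma_finite (count_space (UNIV::(int\<times>int) set)) (lborel :: (real^2) measure)"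
  by (intro pair_sigma_finite.intro sigma_finite_measure_count_space lborel.sigma_finite_measure_axioms)

lemma weight_int:
  fixes u f0 :: "real^2 \<Rightarrow> real" and Usq :: ennreal
  assumes s: "s>0" and one: "\<forall>x. norm x \<le> 2 \<longrightarrow> f0 x = 1"
    and f0m: "f0 \<in> borel_measurable borel" and um: "u \<in> borel_measurable borel"
    and U: "\<And>m. (\<integral>\<^sup>+ y. ennreal ((f0 (y - latt m))\<^sup>2 * (u y)\<^sup>2) \<partial>lborel) \<le> Usq"
  shows "(\<integral>\<^sup>+ y. ennreal ((u y)\<^sup>2 * (2 + norm (y - latt j)) powr (-2-s)) \<partial>lborel)
         \<le> Usq * (\<integral>\<^sup>+ m. ennreal (rhot (1+s/2) m) \<partial>count_space UNIV)"
proof -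
  note [measurable] = f0m um
  define p where "p = 1 + s/2"
  define F where "F m y = ennreal (rhot p (fst m - fst j, snd m - snd j) * ((f0 (y - latt m))\<^sup>2 * (u y)\<^sup>2))"
    for m :: "int\<times>int" and y :: "real^2"
  have rh0: "rhot p m \<ge> 0" for m by (simp add: rhot_def)
  have pt: "ennreal ((u y)\<^sup>2 * (2 + norm (y - latt j)) powr (-2-s)) \<le> (\<integral>\<^sup>+ m. F m y \<partial>count_space UNIV)" for y
  proof -
    define m0 where "m0 = (\<lfloor>y$1\<rfloor>, \<lfloor>y$2\<rfloor>)"
    have w: "(2 + norm (y - latt j)) powr (-2-s) \<le> rhot p (fst m0 - fst j, snd m0 - snd j) * (f0 (y - latt m0))^2"
      using weight_pt[OF s one m0_def] unfolding p_def .
    have "ennreal ((u y)\<^sup>2 * (2 + norm (y - latt j)) powr (-2-s)) \<le> F m0 y"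
      unfolding F_def using w by (intro ennreal_leI) (simp add: mult_left_mono mult.commute mult.left_commute)
    also have "\<dots> \<le> (\<integral>\<^sup>+ m. F m y \<partial>count_space UNIV)" by (rule count_single_le)
    finally show ?thesis .
  qed
  have Fm: "(\<lambda>(m, y). F m y) \<in> borel_measurable (count_space UNIV \<Otimes>\<^sub>M lborel)"
    by (rule measurable_pair_measure_countable1) (auto simp: F_def)
  have "(\<integral>\<^sup>+ y. ennreal ((u y)\<^sup>2 * (2 + norm (y - latt j)) powr (-2-s)) \<partial>lborel)
      \<le> (\<integral>\<^sup>+ y. (\<integral>\<^sup>+ m. F m y \<partial>count_space UNIV) \<partial>lborel)"
    by (intro nn_integral_mono pt)
  also have "\<dots> = (\<integral>\<^sup>+ m. (\<integral>\<^sup>+ y. F m y \<partial>lborel) \<partial>count_space UNIV)"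
    by (rule pair_sigma_finite.Fubini'[OF pair_sf_count_lborel Fm])
  also have "\<dots> \<le> (\<integral>\<^sup>+ m. ennreal (rhot p (fst m - fst j, snd m - snd j)) * Usq \<partial>count_space UNIV)"
  proof (intro nn_integral_mono)
    fix m
    have "(\<integral>\<^sup>+ y. F m y \<partial>lborel) = ennreal (rhot p (fst m - fst j, snd m - snd j)) *
        (\<integral>\<^sup>+ y. ennreal ((f0 (y - latt m))\<^sup>2 * (u y)\<^sup>2) \<partial>lborel)"
      unfolding F_def using rh0 by (simp add: ennreal_mult nn_integral_cmult)
    also have "\<dots> \<le> ennreal (rhot p (fst m - fst j, snd m - snd j)) * Usq"
      by (intro mult_left_mono U) simp
    finally show "(\<integral>\<^sup>+ y. F m y \<partial>lborel) \<le> ennreal (rhot p (fst m - fst j, snd m - snd j)) * Usq" .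
  qed
  also have "\<dots> = (\<integral>\<^sup>+ m. ennreal (rhot p (fst m - fst j, snd m - snd j)) \<partial>count_space UNIV) * Usq"
    by (simp add: nn_integral_multc)
  also have "\<dots> = Usq * (\<integral>\<^sup>+ m. ennreal (rhot (1+s/2) m) \<partial>count_space UNIV)"
    unfolding p_def sum_rhot_shift by (simp add: mult.commute)
  finally show ?thesis .
qed


lemma nn_integral_shift:
  fixes f :: "'a::euclidean_space \<Rightarrow> ennreal"
  assumes f: "f \<in> borel_measurable borel"
  shows "(\<integral>\<^sup>+ x. f (x - y) \<partial>lborel) = integral\<^sup>N lborel f"
proof -
  have "integral\<^sup>N lborel f = integral\<^sup>N (distr lborel borel ((+) (-y))) f"
    by (simp add: lborel_distr_plus)
  also have "\<dots> = (\<integral>\<^sup>+ x. f (-y + x) \<partial>lborel)"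
    using f by (intro nn_integral_distr) auto
  finally show ?thesis by simp
qed

lemma hj_bound:
  assumes L: "L \<ge> 0" and s: "0 < s" "s < 1"
  shows "(\<integral>\<^sup>+ x. ennreal (indicator (cball c 3) x * gk L s (x - y)) \<partial>lborel)
     \<le> ((\<integral>\<^sup>+ z. ennreal (gk L s z) \<partial>lborel) * ennreal (8 powr (2+s)) + ennreal (36 * 4 powr (2+s)))
        * ennreal ((2 + norm (y - c)) powr (-2-s))"
  (is "?L \<le> (?G * _ + _) * _")
proof -
  define N where "N = norm (y - c)"
  have N0: "N \<ge> 0" by (simp add: N_def)
  have wpos: "(2 + N) powr (-2-s) > 0" using N0 by simp
  show ?thesis
  proof (cases "N \<le> 6")
    case True
    have "?L \<le> (\<integral>\<^sup>+ x. ennreal (gk L s (x - y)) \<partial>lborel)"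
      using gk_nonneg[OF L] by (intro nn_integral_mono ennreal_leI) (auto simp: indicator_def)
    also have "\<dots> = ?G" using nn_integral_shift[of "\<lambda>z. ennreal (gk L s z)" y] by simp
    also have "\<dots> \<le> ?G * ennreal (8 powr (2+s) * (2 + N) powr (-2-s))"
    proof -
      have "8 powr (-2-s) \<le> (2 + N) powr (-2-s)" using True s N0 by (intro powr_mono2') auto
      moreover have e: "8 powr (2+s) * 8 powr (-2-s) = (1::real)" by (simp add: powr_add[symmetric])
      ultimately have "8 powr (2+s) * 8 powr (-2-s) \<le> 8 powr (2+s) * (2 + N) powr (-2-s)"
        by (intro mult_left_mono) auto
      then have "ennreal 1 \<le> ennreal (8 powr (2+s) * (2 + N) powr (-2-s))" using e by (intro ennreal_leI) simp
      then have "?G * ennreal 1 \<le> ?G * ennreal (8 powr (2+s) * (2 + N) powr (-2-s))"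
        by (rule mult_left_mono) simp
      then show ?thesis by simp
    qed
    also have "\<dots> \<le> (?G * ennreal (8 powr (2+s)) + ennreal (36 * 4 powr (2+s))) * ennreal ((2 + N) powr (-2-s))"
      by (simp add: ennreal_mult distrib_right mult.assoc add_increasing2)
    finally show ?thesis unfolding N_def .
  next
    case False
    define K where "K = 4 powr (2+s) * (2 + N) powr (-2-s)"
    have K0: "K \<ge> 0" by (simp add: K_def)
    have pt: "indicator (cball c 3) x * gk L s (x - y) \<le> indicator (cball c 3) x * K" for x
    proof (cases "x \<in> cball c 3")
      case True
      then have "norm (x - c) \<le> 3" by (simp add: dist_norm norm_minus_commute)
      moreover have "norm (y - c) \<le> norm (x - y) + norm (x - c)"
        using norm_triangle_ineq4[of "x - c" "x - y"] by (simp add: add.commute)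
      ultimately have d: "norm (x - y) \<ge> N / 2" "norm (x - y) \<ge> 1" using False N_def by auto
      then have "x - y \<noteq> 0" by auto
      then have "gk L s (x - y) = norm (x - y) powr (-2-s)" using d by (simp add: gk_def)
      also have "\<dots> \<le> ((2 + N)/4) powr (-2-s)" using d False s by (intro powr_mono2') auto
      also have "\<dots> = K"
      proof -
        have q: "(4::real) powr (-2-s) = inverse (4 powr (2+s))" using powr_minus[of 4 "2+s"] by simp
        have "((2+N)/4) powr (-2-s) = (2+N) powr (-2-s) / 4 powr (-2-s)" using N0 by (simp add: powr_divide)
        also have "\<dots> = (2+N) powr (-2-s) * 4 powr (2+s)" unfolding q by (simp add: divide_inverse)
        finally show ?thesis by (simp add: K_def mult.commute)
      qed
      finally show ?thesis using True by simp
    qed simp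
    have "?L \<le> (\<integral>\<^sup>+ x. ennreal K * indicator (cball c 3) x \<partial>lborel)"
    proof (intro nn_integral_mono)
      fix x
      show "ennreal (indicator (cball c 3) x * gk L s (x - y)) \<le> ennreal K * indicator (cball c 3) x"
        using pt[of x] by (cases "x \<in> cball c 3") (auto intro: ennreal_leI)
    qed
    also have "\<dots> = ennreal K * emeasure lborel (cball c 3)"
      by (simp add: nn_integral_cmult_indicator)
    also have "\<dots> \<le> ennreal K * ennreal 36"
      using emeasure_cball_le[of 3 c] by (intro mult_left_mono) auto
    also have "\<dots> = ennreal (K * 36)" using K0 by (simp add: ennreal_mult)
    also have "\<dots> = ennreal (36 * 4 powr (2+s) * (2 + N) powr (-2-s))" by (simp add: K_def mult_ac)
    also have "\<dots> = ennreal (36 * 4 powr (2+s)) * ennreal ((2 + N) powr (-2-s))" by (simp add: ennreal_mult)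
    also have "\<dots> \<le> (?G * ennreal (8 powr (2+s)) + ennreal (36 * 4 powr (2+s))) * ennreal ((2 + N) powr (-2-s))"
      by (intro mult_right_mono add_increasing) auto
    finally show ?thesis unfolding N_def .
  qed
qed


lemma cs_pt:
  fixes g u :: "real^2 \<Rightarrow> real"
  assumes gm: "g \<in> borel_measurable borel" and um: "u \<in> borel_measurable borel" and g0: "\<And>z. g z \<ge> 0"
  shows "(\<integral>\<^sup>+ y. ennreal (g y * \<bar>u y\<bar>) \<partial>lborel)^2
     \<le> (\<integral>\<^sup>+ y. ennreal (g y) \<partial>lborel) * (\<integral>\<^sup>+ y. ennreal (g y * (u y)\<^sup>2) \<partial>lborel)"
proof -
  note [measurable] = gm um
  define a where "a y = ennreal (sqrt (g y))" for y
  define b where "b y = ennreal (sqrt (g y) * \<bar>u y\<bar>)" for y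
  have "(\<integral>\<^sup>+ y. a y * b y \<partial>lborel)^2 \<le> (\<integral>\<^sup>+ y. (a y)^2 \<partial>lborel) * (\<integral>\<^sup>+ y. (b y)^2 \<partial>lborel)"
    by (rule Cauchy_Schwarz_nn_integral) (auto simp: a_def b_def)
  moreover have "a y * b y = ennreal (g y * \<bar>u y\<bar>)" for y
    using g0[of y] by (simp add: a_def b_def ennreal_mult[symmetric] mult.assoc[symmetric])
  moreover have "(a y)^2 = ennreal (g y)" for y
    using g0[of y] by (simp add: a_def ennreal_power)
  moreover have "(b y)^2 = ennreal (g y * (u y)\<^sup>2)" for y
    using g0[of y] by (simp add: b_def ennreal_power power_mult_distrib)
  ultimately show ?thesis by simp
qed


lemma cball_pred[measurable]: "Measurable.pred borel (\<lambda>x::real^2. x \<in> cball c r)"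
  unfolding pred_def by auto

lemma gk_sym: "gk L s (x - y) = gk L s (y - x)"
  by (simp add: gk_def norm_minus_commute)

definition KC :: "real \<Rightarrow> real \<Rightarrow> ennreal" where
  "KC L s = (\<integral>\<^sup>+ z. ennreal (gk L s z) \<partial>lborel) *
     ((\<integral>\<^sup>+ z. ennreal (gk L s z) \<partial>lborel) * ennreal (8 powr (2+s)) + ennreal (36 * 4 powr (2+s))) *
     (\<integral>\<^sup>+ m. ennreal (rhot (1+s/2) m) \<partial>count_space UNIV)"

lemma KC_finite: "L \<ge> 0 \<Longrightarrow> 0 < s \<Longrightarrow> s < 1 \<Longrightarrow> KC L s < \<infinity>"
  unfolding KC_def using gk_integral_finite[of L s] sum_rhot_finite[of "1+s/2"]
  by (simp add: ennreal_mult_less_top)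

lemma main_est:
  fixes u f0 :: "real^2 \<Rightarrow> real" and Usq :: ennreal and Phi :: "real^2 \<Rightarrow> ennreal"
  assumes L: "L \<ge> 0" and s: "0 < s" "s < 1"
    and one: "\<forall>x. norm x \<le> 2 \<longrightarrow> f0 x = 1"
    and bd: "\<forall>x. 0 \<le> f0 x \<and> f0 x \<le> 1"
    and zero: "\<forall>x. norm x \<ge> 3 \<longrightarrow> f0 x = 0"
    and f0m: "f0 \<in> borel_measurable borel" and um: "u \<in> borel_measurable borel"
    and U: "\<And>m. (\<integral>\<^sup>+ y. ennreal ((f0 (y - latt m))\<^sup>2 * (u y)\<^sup>2) \<partial>lborel) \<le> Usq"
    and FB: "AE x in lebesgue. Phi x \<le> (\<integral>\<^sup>+ y. ennreal (gk L s (x - y) * \<bar>u y\<bar>) \<partial>lborel)"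
    and cj: "c = latt j"
  shows "(\<integral>\<^sup>+ x. ennreal ((f0 (x - c))\<^sup>2) * (Phi x)^2 \<partial>lebesgue) \<le> KC L s * Usq"
proof -
  note [measurable] = f0m um
  define G where "G = (\<integral>\<^sup>+ z. ennreal (gk L s z) \<partial>lborel)"
  define C2 where "C2 = G * ennreal (8 powr (2+s)) + ennreal (36 * 4 powr (2+s))"
  define S where "S = (\<integral>\<^sup>+ m. ennreal (rhot (1+s/2) m) \<partial>count_space UNIV)"
  define I where "I x = (\<integral>\<^sup>+ y. ennreal (gk L s (x - y) * (u y)\<^sup>2) \<partial>lborel)" for x
  have g0: "gk L s z \<ge> 0" for z using gk_nonneg[OF L] .
  have ind: "(f0 (x - c))\<^sup>2 \<le> indicator (cball c 3) x" for x
  proof (cases "x \<in> cball c 3")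
    case True
    then show ?thesis using bd by (simp add: power_le_one)
  next
    case False
    then have "norm (x - c) \<ge> 3" by (simp add: dist_norm norm_minus_commute)
    then show ?thesis using zero False by simp
  qed
  have pt: "ennreal ((f0 (x - c))\<^sup>2) * (Phi x)^2 \<le> indicator (cball c 3) x * (G * I x)"
    if FBx: "Phi x \<le> (\<integral>\<^sup>+ y. ennreal (gk L s (x - y) * \<bar>u y\<bar>) \<partial>lborel)" for x
  proof -
    have gm: "(\<lambda>y. gk L s (x - y)) \<in> borel_measurable borel" by measurable
    have GG: "(\<integral>\<^sup>+ y. ennreal (gk L s (x - y)) \<partial>lborel) = G"
    proof -
      have "(\<integral>\<^sup>+ y. ennreal (gk L s (x - y)) \<partial>lborel) = (\<integral>\<^sup>+ y. ennreal (gk L s (y - x)) \<partial>lborel)"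
        by (simp add: gk_sym)
      also have "\<dots> = G" unfolding G_def
        by (rule nn_integral_shift) measurable
      finally show ?thesis .
    qed
    have "(Phi x)^2 \<le> (\<integral>\<^sup>+ y. ennreal (gk L s (x - y) * \<bar>u y\<bar>) \<partial>lborel)^2"
      using FBx by (intro power_mono) auto
    also have "\<dots> \<le> G * I x"
      using cs_pt[OF gm um g0] unfolding GG I_def .
    finally have a: "(Phi x)^2 \<le> G * I x" .
    have "ennreal ((f0 (x - c))\<^sup>2) * (Phi x)^2 \<le> ennreal (indicator (cball c 3) x) * (G * I x)"
      using ind[of x] a by (intro mult_mono) (auto intro: ennreal_leI)
    then show ?thesis by (simp add: ennreal_indicator)
  qed
  have Im: "I \<in> borel_measurable borel"
  proof -
    have "(\<lambda>(x, y). ennreal (gk L s (x - y) * (u y)\<^sup>2)) \<in> borel_measurable (lborel \<Otimes>\<^sub>M (lborel::(real^2) measure))"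
      by measurable
    then show ?thesis unfolding I_def using lborel.borel_measurable_nn_integral_fst[of "\<lambda>(x,y). ennreal (gk L s (x - y) * (u y)\<^sup>2)" lborel]
      by simp
  qed
  have "(\<integral>\<^sup>+ x. ennreal ((f0 (x - c))\<^sup>2) * (Phi x)^2 \<partial>lebesgue)
      \<le> (\<integral>\<^sup>+ x. indicator (cball c 3) x * (G * I x) \<partial>lebesgue)"
    using FB pt by (intro nn_integral_mono_AE) auto
  also have "\<dots> = (\<integral>\<^sup>+ x. indicator (cball c 3) x * (G * I x) \<partial>lborel)"
    by (rule nn_integral_completion)
  also have "\<dots> = G * (\<integral>\<^sup>+ x. indicator (cball c 3) x * I x \<partial>lborel)"
  proof -
    note Im[measurable]
    have ImI: "(\<lambda>x. indicator (cball c 3) x * I x) \<in> borel_measurable lborel" unfolding measurable_lborel2 by measurable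
    show ?thesis using nn_integral_cmult[OF ImI, of G] by (simp add: mult.left_commute)
  qed
  also have "(\<integral>\<^sup>+ x. indicator (cball c 3) x * I x \<partial>lborel)
     = (\<integral>\<^sup>+ x. \<integral>\<^sup>+ y. ennreal (indicator (cball c 3) x * gk L s (x - y)) * ennreal ((u y)\<^sup>2) \<partial>lborel \<partial>lborel)"
  proof (intro nn_integral_cong)
    fix x
    have "indicator (cball c 3) x * I x = (\<integral>\<^sup>+ y. indicator (cball c 3) x * ennreal (gk L s (x - y) * (u y)\<^sup>2) \<partial>lborel)"
      unfolding I_def by (rule nn_integral_cmult[symmetric]) measurable
    also have "\<dots> = (\<integral>\<^sup>+ y. ennreal (indicator (cball c 3) x * gk L s (x - y)) * ennreal ((u y)\<^sup>2) \<partial>lborel)"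
      using g0 by (intro nn_integral_cong) (simp add: ennreal_mult[symmetric] indicator_def)
    finally show "indicator (cball c 3) x * I x = (\<integral>\<^sup>+ y. ennreal (indicator (cball c 3) x * gk L s (x - y)) * ennreal ((u y)\<^sup>2) \<partial>lborel)" .
  qed
  also have "\<dots> = (\<integral>\<^sup>+ y. \<integral>\<^sup>+ x. ennreal (indicator (cball c 3) x * gk L s (x - y)) * ennreal ((u y)\<^sup>2) \<partial>lborel \<partial>lborel)"
    by (rule lborel_pair.Fubini'[symmetric]) measurable
  also have "\<dots> = (\<integral>\<^sup>+ y. (\<integral>\<^sup>+ x. ennreal (indicator (cball c 3) x * gk L s (x - y)) \<partial>lborel) * ennreal ((u y)\<^sup>2) \<partial>lborel)"
    by (intro nn_integral_cong nn_integral_multc) measurable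
  also have "\<dots> \<le> (\<integral>\<^sup>+ y. C2 * ennreal ((2 + norm (y - c)) powr (-2-s)) * ennreal ((u y)\<^sup>2) \<partial>lborel)"
    using hj_bound[OF L s, of c] unfolding C2_def G_def
    by (intro nn_integral_mono mult_right_mono) auto
  also have "\<dots> = C2 * (\<integral>\<^sup>+ y. ennreal ((u y)\<^sup>2 * (2 + norm (y - c)) powr (-2-s)) \<partial>lborel)"
    by (subst nn_integral_cmult[symmetric]) (auto simp: ennreal_mult mult_ac intro!: nn_integral_cong)
  also have "\<dots> \<le> C2 * (Usq * S)"
    unfolding S_def cj by (intro mult_left_mono weight_int[OF s(1) one f0m um U]) auto
  finally have "(\<integral>\<^sup>+ x. ennreal ((f0 (x - c))\<^sup>2) * (Phi x)^2 \<partial>lebesgue) \<le> G * (C2 * (Usq * S))"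
    by (simp add: mult_left_mono)
  also have "G * (C2 * (Usq * S)) = KC L s * Usq"
    unfolding KC_def G_def C2_def S_def by (simp add: mult_ac)
  finally show ?thesis .
qed


lemma kern_bound:
  assumes lip: "\<forall>x y. \<bar>f0 x - f0 y\<bar> \<le> B * norm (x - y)" and B: "B \<ge> 0"
    and bd: "\<forall>x. 0 \<le> f0 x \<and> f0 x \<le> 1" and s: "s > 0"
  shows "\<bar>(f0 (x - k) - f0 (y - k)) * w / norm (x - y) powr (2+s)\<bar> \<le> gk B s (x - y) * \<bar>w\<bar>"
proof -
  define d where "d = f0 (x - k) - f0 (y - k)"
  define r where "r = norm (x - y)"
  have d1: "\<bar>d\<bar> \<le> B * r" using lip[rule_format, of "x - k" "y - k"] by (simp add: d_def r_def)
  have d2: "\<bar>d\<bar> \<le> 1" using bd[rule_format, of "x - k"] bd[rule_format, of "y - k"] unfolding d_def by linarith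
  show ?thesis
  proof (cases "x = y")
    case True then show ?thesis by (simp add: gk_def)
  next
    case False
    then have r0: "r > 0" by (simp add: r_def)
    have lhs: "\<bar>(f0 (x - k) - f0 (y - k)) * w / norm (x - y) powr (2+s)\<bar> = \<bar>d\<bar> * \<bar>w\<bar> / r powr (2+s)"
      by (simp add: d_def r_def abs_mult)
    show ?thesis
    proof (cases "r < 1")
      case True
      have "\<bar>d\<bar> * \<bar>w\<bar> / r powr (2+s) \<le> B * r * \<bar>w\<bar> / r powr (2+s)"
        using d1 r0 by (intro divide_right_mono mult_right_mono) auto
      also have "\<dots> = B * (r / r powr (2+s)) * \<bar>w\<bar>" by simp
      also have "r / r powr (2+s) = r powr (-1-s)"
      proof -
        have "r powr (-1-s) = r powr (1 - (2+s))" by simp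
        also have "\<dots> = r powr 1 / r powr (2+s)" by (rule powr_diff)
        also have "\<dots> = r / r powr (2+s)" using r0 by simp
        finally show ?thesis by simp
      qed
      finally show ?thesis using lhs True False by (simp add: gk_def r_def)
    next
      case False2: False
      have "\<bar>d\<bar> * \<bar>w\<bar> / r powr (2+s) \<le> 1 * \<bar>w\<bar> / r powr (2+s)"
        using d2 r0 by (intro divide_right_mono mult_right_mono) auto
      also have "\<dots> = r powr (-2-s) * \<bar>w\<bar>"
      proof -
        have "r powr (-2-s) = r powr (0 - (2+s))" by simp
        also have "\<dots> = r powr 0 / r powr (2+s)" by (rule powr_diff)
        also have "\<dots> = 1 / r powr (2+s)" using r0 by simp
        finally show ?thesis by simp
      qed
      finally show ?thesis using lhs False2 False by (simp add: gk_def r_def)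
    qed
  qed
qed


lemma ind_bound:
  fixes f0 :: "real^2 \<Rightarrow> real"
  assumes bd: "\<forall>x. 0 \<le> f0 x \<and> f0 x \<le> 1" and zero: "\<forall>x. norm x \<ge> 3 \<longrightarrow> f0 x = 0"
  shows "(f0 (x - c))\<^sup>2 \<le> indicator (cball c 3) x"
proof (cases "x \<in> cball c 3")
  case True
  have "(f0 (x-c))\<^sup>2 \<le> 1" using bd[rule_format, of "x - c"] by (auto intro: power_le_one)
  then show ?thesis using True by simp
next
  case False
  then have "norm (x - c) \<ge> 3" by (simp add: dist_norm norm_minus_commute)
  then show ?thesis using zero False by simp
qed

lemma l2_local:
  fixes f0 w :: "real^2 \<Rightarrow> real"
  assumes w: "w \<in> L2loc" and f0m: "f0 \<in> borel_measurable borel"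
    and bd: "\<forall>x. 0 \<le> f0 x \<and> f0 x \<le> 1" and zero: "\<forall>x. norm x \<ge> 3 \<longrightarrow> f0 x = 0"
  shows "(\<integral>\<^sup>+ x. ennreal ((f0 (x - c) * w x)\<^sup>2) \<partial>lebesgue) = ennreal ((l2norm (\<lambda>x. f0 (x - c) * w x))\<^sup>2)"
    and "(\<integral>\<^sup>+ x. ennreal ((f0 (x - c) * w x)\<^sup>2) \<partial>lebesgue) < \<infinity>"
proof -
  have wm: "w \<in> borel_measurable lebesgue" and wi: "set_integrable lebesgue (cball c 3) (\<lambda>x. (w x)\<^sup>2)"
    using w unfolding L2loc_def by auto
  note [measurable] = f0m
  have f0m': "(\<lambda>x. f0 (x - c)) \<in> borel_measurable lebesgue"
    by (intro measurable_completion) measurable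
  have hm: "(\<lambda>x. (f0 (x - c) * w x)\<^sup>2) \<in> borel_measurable lebesgue"
    using f0m' wm by measurable
  have "(\<integral>\<^sup>+ x. ennreal ((f0 (x - c) * w x)\<^sup>2) \<partial>lebesgue)
      \<le> (\<integral>\<^sup>+ x. ennreal (norm (indicator (cball c 3) x *\<^sub>R (w x)\<^sup>2)) \<partial>lebesgue)"
  proof (intro nn_integral_mono ennreal_leI)
    fix x
    have "(f0 (x - c) * w x)\<^sup>2 = (f0 (x - c))\<^sup>2 * (w x)\<^sup>2" by (simp add: power_mult_distrib)
    also have "\<dots> \<le> indicator (cball c 3) x * (w x)\<^sup>2"
      using ind_bound[OF bd zero, of x c] by (intro mult_right_mono) auto
    finally show "(f0 (x - c) * w x)\<^sup>2 \<le> norm (indicator (cball c 3) x *\<^sub>R (w x)\<^sup>2)"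
      by (simp add: abs_mult)
  qed
  also have "\<dots> < \<infinity>"
    using wi unfolding set_integrable_def by (simp add: integrable_iff_bounded)
  finally show fin: "(\<integral>\<^sup>+ x. ennreal ((f0 (x - c) * w x)\<^sup>2) \<partial>lebesgue) < \<infinity>" .
  have "(LINT x|lebesgue. (f0 (x - c) * w x)\<^sup>2) = enn2real (\<integral>\<^sup>+ x. ennreal ((f0 (x - c) * w x)\<^sup>2) \<partial>lebesgue)"
    using hm by (intro integral_eq_nn_integral) auto
  moreover have "(l2norm (\<lambda>x. f0 (x - c) * w x))\<^sup>2 = (LINT x|lebesgue. (f0 (x - c) * w x)\<^sup>2)"
    unfolding l2norm_def by (simp add: integral_nonneg_AE)
  ultimately show "(\<integral>\<^sup>+ x. ennreal ((f0 (x - c) * w x)\<^sup>2) \<partial>lebesgue) = ennreal ((l2norm (\<lambda>x. f0 (x - c) * w x))\<^sup>2)"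
    using fin by simp
qed

lemma latt_in_Bset: "(\<lambda>x. f0 (x - latt m)) \<in> Bset f0"
proof -
  have "\<forall>i. latt m $ i \<in> \<int>" by (simp add: forall_2)
  then show ?thesis unfolding Bset_def by blast
qed

lemma Bset_latt: "\<phi> \<in> Bset f0 \<Longrightarrow> \<exists>m. \<phi> = (\<lambda>x. f0 (x - latt m))"
proof -
  assume "\<phi> \<in> Bset f0"
  then obtain k :: "real^2" where k: "\<phi> = (\<lambda>x. f0 (x - k))" "\<forall>i. k $ i \<in> \<int>" unfolding Bset_def by blast
  obtain a where a: "k $ 1 = real_of_int a" using k(2) by (metis Ints_cases)
  obtain b where b: "k $ 2 = real_of_int b" using k(2) by (metis Ints_cases)
  have "k = latt (a, b)" using a b by (simp add: vec_eq_iff forall_2)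
  then show ?thesis using k by blast
qed

lemma uloc_bound:
  fixes f0 w :: "real^2 \<Rightarrow> real"
  assumes w: "w \<in> L2uloc f0" and f0m: "f0 \<in> borel_measurable borel"
    and bd: "\<forall>x. 0 \<le> f0 x \<and> f0 x \<le> 1" and zero: "\<forall>x. norm x \<ge> 3 \<longrightarrow> f0 x = 0"
  shows "(\<integral>\<^sup>+ x. ennreal ((f0 (x - latt m) * w x)\<^sup>2) \<partial>lebesgue) \<le> ennreal ((uloc_norm f0 w)\<^sup>2)"
proof -
  have wl: "w \<in> L2loc" and bdd: "bdd_above ((\<lambda>\<phi>. l2norm (\<lambda>x. \<phi> x * w x)) ` Bset f0)"
    using w unfolding L2uloc_def by auto
  have le: "l2norm (\<lambda>x. f0 (x - latt m) * w x) \<le> uloc_norm f0 w"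
    unfolding uloc_norm_def using bdd latt_in_Bset[of f0 m]
    by (rule cSUP_upper2) simp
  have "0 \<le> l2norm (\<lambda>x. f0 (x - latt m) * w x)" by (simp add: l2norm_def)
  then have "(l2norm (\<lambda>x. f0 (x - latt m) * w x))\<^sup>2 \<le> (uloc_norm f0 w)\<^sup>2"
    using le by (intro power_mono) auto
  then show ?thesis using l2_local(1)[OF wl f0m bd zero, of "latt m"] by (simp add: ennreal_leI)
qed


lemma T_pt:
  fixes f0 w w' :: "real^2 \<Rightarrow> real"
  assumes lip: "\<forall>x y. \<bar>f0 x - f0 y\<bar> \<le> B * norm (x - y)" and B: "B \<ge> 0"
    and bd: "\<forall>x. 0 \<le> f0 x \<and> f0 x \<le> 1" and s: "s > 0"
    and ae: "AE y in lebesgue. w y = w' y" and w'm: "w' \<in> borel_measurable borel"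
  shows "ennreal \<bar>Tcomm s (\<lambda>x. f0 (x - k)) w x\<bar>
     \<le> (\<integral>\<^sup>+ y. ennreal (gk B s (x - y) * \<bar>frac_const s * w' y\<bar>) \<partial>lborel)"
proof -
  note [measurable] = w'm
  define h where "h y = (f0 (x - k) - f0 (y - k)) * w y / norm (x - y) powr (2+s)" for y
  define I where "I = (LINT y|lebesgue. h y)"
  have T: "Tcomm s (\<lambda>x. f0 (x - k)) w x = frac_const s * I"
    unfolding Tcomm_def I_def h_def by simp
  have bI: "ennreal \<bar>I\<bar> \<le> (\<integral>\<^sup>+ y. ennreal (gk B s (x - y) * \<bar>w' y\<bar>) \<partial>lborel)"
  proof (cases "integrable lebesgue h")
    case True
    have "ennreal \<bar>I\<bar> = ennreal (norm I)" by simp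
    also have "\<dots> \<le> (\<integral>\<^sup>+ y. ennreal (norm (h y)) \<partial>lebesgue)"
      unfolding I_def by (rule integral_norm_bound_ennreal[OF True])
    also have "\<dots> \<le> (\<integral>\<^sup>+ y. ennreal (gk B s (x - y) * \<bar>w y\<bar>) \<partial>lebesgue)"
      unfolding h_def using kern_bound[OF lip B bd s]
      by (intro nn_integral_mono ennreal_leI) simp
    also have "\<dots> = (\<integral>\<^sup>+ y. ennreal (gk B s (x - y) * \<bar>w' y\<bar>) \<partial>lebesgue)"
      using ae by (intro nn_integral_cong_AE) auto
    also have "\<dots> = (\<integral>\<^sup>+ y. ennreal (gk B s (x - y) * \<bar>w' y\<bar>) \<partial>lborel)"
      by (rule nn_integral_completion)
    finally show ?thesis .
  next
    case False
    then have "I = 0" unfolding I_def by (rule not_integrable_integral_eq)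
    then show ?thesis by simp
  qed
  have "ennreal \<bar>Tcomm s (\<lambda>x. f0 (x - k)) w x\<bar> = ennreal \<bar>frac_const s\<bar> * ennreal \<bar>I\<bar>"
    unfolding T by (simp add: abs_mult ennreal_mult)
  also have "\<dots> \<le> ennreal \<bar>frac_const s\<bar> * (\<integral>\<^sup>+ y. ennreal (gk B s (x - y) * \<bar>w' y\<bar>) \<partial>lborel)"
    using bI by (rule mult_left_mono) simp
  also have "\<dots> = (\<integral>\<^sup>+ y. ennreal \<bar>frac_const s\<bar> * ennreal (gk B s (x - y) * \<bar>w' y\<bar>) \<partial>lborel)"
    by (rule nn_integral_cmult[symmetric]) measurable
  also have "\<dots> = (\<integral>\<^sup>+ y. ennreal (gk B s (x - y) * \<bar>frac_const s * w' y\<bar>) \<partial>lborel)"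
    using gk_nonneg[OF B] by (intro nn_integral_cong) (simp add: ennreal_mult[symmetric] abs_mult mult_ac)
  finally show ?thesis .
qed


lemma T_meas:
  fixes f0 w w' :: "real^2 \<Rightarrow> real"
  assumes f0m: "f0 \<in> borel_measurable borel" and wm: "w \<in> borel_measurable lebesgue"
    and ae: "AE y in lebesgue. w y = w' y" and w'm: "w' \<in> borel_measurable borel"
  shows "Tcomm s (\<lambda>x. f0 (x - k)) w \<in> borel_measurable lebesgue"
proof -
  note [measurable] = f0m w'm
  define H where "H x y = (f0 (x - k) - f0 (y - k)) * w' y / norm (x - y) powr (2+s)" for x y :: "real^2"
  have eq: "Tcomm s (\<lambda>x. f0 (x - k)) w x = frac_const s * (LINT y|lborel. H x y)" for x
  proof -
    have "(LINT y|lebesgue. (f0 (x - k) - f0 (y - k)) * w y / norm (x - y) powr (2+s))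
        = (LINT y|lebesgue. H x y)"
    proof (rule integral_cong_AE)
      show "(\<lambda>y. (f0 (x - k) - f0 (y - k)) * w y / norm (x - y) powr (2+s)) \<in> borel_measurable lebesgue"
      proof -
        have a: "(\<lambda>y. f0 (x - k) - f0 (y - k)) \<in> borel_measurable lebesgue"
          by (intro measurable_completion) measurable
        have b: "(\<lambda>y. norm (x - y) powr (2+s)) \<in> borel_measurable lebesgue"
          by (intro measurable_completion) measurable
        show ?thesis using a b wm by measurable
      qed
      show "(\<lambda>y. H x y) \<in> borel_measurable lebesgue"
        unfolding H_def by (intro measurable_completion) measurable
      show "AE y in lebesgue. (f0 (x - k) - f0 (y - k)) * w y / norm (x - y) powr (2+s) = H x y"
        using ae by eventually_elim (simp add: H_def)
    qed
    also have "\<dots> = (LINT y|lborel. H x y)"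
      unfolding H_def by (intro integral_completion) measurable
    finally show ?thesis unfolding Tcomm_def by simp
  qed
  have "(\<lambda>(x, y). H x y) \<in> borel_measurable (lborel \<Otimes>\<^sub>M (lborel::(real^2) measure))"
    unfolding H_def by measurable
  then have "(\<lambda>x. LINT y|lborel. H x y) \<in> borel_measurable lborel"
    by (rule lborel.borel_measurable_lebesgue_integral)
  then have "(\<lambda>x. frac_const s * (LINT y|lborel. H x y)) \<in> borel_measurable lborel"
    by measurable
  then have "(\<lambda>x. frac_const s * (LINT y|lborel. H x y)) \<in> borel_measurable lebesgue"
    by (rule measurable_completion)
  moreover have "Tcomm s (\<lambda>x. f0 (x - k)) w = (\<lambda>x. frac_const s * (LINT y|lborel. H x y))"
    by (rule ext) (rule eq)
  ultimately show ?thesis by simp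
qed


lemma near_latt: "norm (y - latt (\<lfloor>y$1\<rfloor>, \<lfloor>y$2\<rfloor>)) \<le> 2"
proof -
  define m0 where "m0 = (\<lfloor>y$1\<rfloor>, \<lfloor>y$2\<rfloor>)"
  have c1: "0 \<le> (y - latt m0)$1 \<and> (y - latt m0)$1 < 1" by (simp add: m0_def, linarith)
  have c2: "0 \<le> (y - latt m0)$2 \<and> (y - latt m0)$2 < 1" by (simp add: m0_def, linarith)
  show ?thesis using norm2_le[of "y - latt m0"] c1 c2 unfolding m0_def by linarith
qed

lemma sq_ennreal: "ennreal ((a * b)\<^sup>2) = ennreal (a\<^sup>2) * (ennreal \<bar>b\<bar>)^2"
  by (simp add: power_mult_distrib ennreal_mult ennreal_power)

lemma l2norm_bound:
  fixes f0 F :: "real^2 \<Rightarrow> real"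
  assumes f0m: "f0 \<in> borel_measurable borel" and Fm: "F \<in> borel_measurable lebesgue"
    and Q: "(\<integral>\<^sup>+ x. ennreal ((f0 (x - c))\<^sup>2) * (ennreal \<bar>F x\<bar>)^2 \<partial>lebesgue) \<le> ennreal Q"
    and Q0: "Q \<ge> 0"
  shows "l2norm (\<lambda>x. f0 (x - c) * F x) \<le> sqrt Q"
proof -
  note [measurable] = f0m
  have f0m': "(\<lambda>x. f0 (x - c)) \<in> borel_measurable lebesgue"
    by (intro measurable_completion) measurable
  have hm: "(\<lambda>x. (f0 (x - c) * F x)\<^sup>2) \<in> borel_measurable lebesgue"
    using f0m' Fm by measurable
  have "(LINT x|lebesgue. (f0 (x - c) * F x)\<^sup>2) = enn2real (\<integral>\<^sup>+ x. ennreal ((f0 (x - c) * F x)\<^sup>2) \<partial>lebesgue)"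
    using hm by (intro integral_eq_nn_integral) auto
  also have "\<dots> \<le> enn2real (ennreal Q)"
    using Q by (intro enn2real_mono) (auto simp: sq_ennreal)
  also have "enn2real (ennreal Q) = Q" using Q0 by simp
  finally have "(LINT x|lebesgue. (f0 (x - c) * F x)\<^sup>2) \<le> Q" .
  then show ?thesis unfolding l2norm_def by simp
qed


lemma J_fin:
  fixes u f0 :: "real^2 \<Rightarrow> real"
  assumes L: "L \<ge> 0" and s: "0 < s" "s < 1"
    and one: "\<forall>x. norm x \<le> 2 \<longrightarrow> f0 x = 1"
    and bd: "\<forall>x. 0 \<le> f0 x \<and> f0 x \<le> 1"
    and zero: "\<forall>x. norm x \<ge> 3 \<longrightarrow> f0 x = 0"
    and f0m: "f0 \<in> borel_measurable borel" and um: "u \<in> borel_measurable borel"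
    and U: "\<And>m. (\<integral>\<^sup>+ y. ennreal ((f0 (y - latt m))\<^sup>2 * (u y)\<^sup>2) \<partial>lborel) \<le> ennreal Q"
  shows "AE x in lebesgue. (\<integral>\<^sup>+ y. ennreal (gk L s (x - y) * \<bar>u y\<bar>) \<partial>lborel) < \<infinity>"
proof -
  note [measurable] = f0m um
  define J where "J x = (\<integral>\<^sup>+ y. ennreal (gk L s (x - y) * \<bar>u y\<bar>) \<partial>lborel)" for x
  have Jm: "J \<in> borel_measurable lebesgue"
  proof -
    have "(\<lambda>(x, y). ennreal (gk L s (x - y) * \<bar>u y\<bar>)) \<in> borel_measurable (lborel \<Otimes>\<^sub>M (lborel::(real^2) measure))"
      by measurable
    then have "J \<in> borel_measurable lborel" unfolding J_def
      using lborel.borel_measurable_nn_integral_fst[of "\<lambda>(x,y). ennreal (gk L s (x - y) * \<bar>u y\<bar>)" lborel]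
      by simp
    then show ?thesis by (rule measurable_completion)
  qed
  have f0m': "(\<lambda>x. f0 (x - c)) \<in> borel_measurable lebesgue" for c
    by (intro measurable_completion) measurable
  have each: "AE x in lebesgue. ennreal ((f0 (x - latt m))\<^sup>2) * (J x)^2 \<noteq> \<infinity>" for m
  proof (rule nn_integral_PInf_AE)
    show "(\<lambda>x. ennreal ((f0 (x - latt m))\<^sup>2) * (J x)^2) \<in> borel_measurable lebesgue"
      using f0m'[of "latt m"] Jm by measurable
    have "(\<integral>\<^sup>+ x. ennreal ((f0 (x - latt m))\<^sup>2) * (J x)^2 \<partial>lebesgue) \<le> KC L s * ennreal Q"
      by (rule main_est[OF L s one bd zero f0m um U, of J "latt m" m]) (simp_all add: J_def)
    also have "\<dots> < \<infinity>" using KC_finite[OF L s] by (simp add: ennreal_mult_less_top)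
    finally show "(\<integral>\<^sup>+ x. ennreal ((f0 (x - latt m))\<^sup>2) * (J x)^2 \<partial>lebesgue) \<noteq> \<infinity>" by simp
  qed
  have "AE x in lebesgue. \<forall>m. ennreal ((f0 (x - latt m))\<^sup>2) * (J x)^2 \<noteq> \<infinity>"
    using each by (simp add: AE_all_countable)
  then show ?thesis
  proof (rule AE_mp, intro AE_I2 impI)
    fix x assume a: "\<forall>m. ennreal ((f0 (x - latt m))\<^sup>2) * (J x)^2 \<noteq> \<infinity>"
    define m0 where "m0 = (\<lfloor>x$1\<rfloor>, \<lfloor>x$2\<rfloor>)"
    have "f0 (x - latt m0) = 1" using one near_latt[of x] unfolding m0_def by simp
    then have "(J x)^2 \<noteq> \<infinity>" using a[rule_format, of m0] by simp
    then show "(\<integral>\<^sup>+ y. ennreal (gk L s (x - y) * \<bar>u y\<bar>) \<partial>lborel) < \<infinity>"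
      unfolding J_def by (simp add: power_eq_top_ennreal top.not_eq_extremum)
  qed
qed


lemma sq_diff_le: "(a - b)\<^sup>2 \<le> 2 * a\<^sup>2 + 2 * (b::real)\<^sup>2"
proof -
  have "2 * a\<^sup>2 + 2 * b\<^sup>2 - (a - b)\<^sup>2 = (a + b)\<^sup>2" by (simp add: power2_eq_square algebra_simps)
  then show ?thesis using zero_le_power2[of "a+b"] by linarith
qed

lemma diff_L2uloc:
  fixes f0 v w :: "real^2 \<Rightarrow> real"
  assumes v: "v \<in> L2uloc f0" and w: "w \<in> L2uloc f0" and f0m: "f0 \<in> borel_measurable borel"
    and bd: "\<forall>x. 0 \<le> f0 x \<and> f0 x \<le> 1" and zero: "\<forall>x. norm x \<ge> 3 \<longrightarrow> f0 x = 0"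
  shows "(\<lambda>x. v x - w x) \<in> L2uloc f0"
proof -
  have vl: "v \<in> L2loc" and wl: "w \<in> L2loc" using v w unfolding L2uloc_def by auto
  have vm: "v \<in> borel_measurable lebesgue" and wm: "w \<in> borel_measurable lebesgue"
    using vl wl unfolding L2loc_def by auto
  have dl: "(\<lambda>x. v x - w x) \<in> L2loc"
    unfolding L2loc_def
  proof (intro CollectI conjI allI impI)
    show "(\<lambda>x. v x - w x) \<in> borel_measurable lebesgue" using vm wm by measurable
    fix K :: "(real^2) set" assume K: "compact K"
    have iv: "integrable lebesgue (\<lambda>x. indicator K x *\<^sub>R (v x)\<^sup>2)"
      using vl K unfolding L2loc_def set_integrable_def by auto
    have iw: "integrable lebesgue (\<lambda>x. indicator K x *\<^sub>R (w x)\<^sup>2)"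
      using wl K unfolding L2loc_def set_integrable_def by auto
    have Km: "K \<in> sets lebesgue"
      using K by (intro sets_completionI_sets) (simp add: compact_imp_closed borel_closed)
    have "integrable lebesgue (\<lambda>x. indicator K x *\<^sub>R (v x - w x)\<^sup>2)"
    proof (rule Bochner_Integration.integrable_bound[where f="\<lambda>x. 2 * (indicator K x *\<^sub>R (v x)\<^sup>2) + 2 * (indicator K x *\<^sub>R (w x)\<^sup>2)"])
      show "integrable lebesgue (\<lambda>x. 2 * (indicator K x *\<^sub>R (v x)\<^sup>2) + 2 * (indicator K x *\<^sub>R (w x)\<^sup>2))"
        using iv iw by simp
      show "(\<lambda>x. indicator K x *\<^sub>R (v x - w x)\<^sup>2) \<in> borel_measurable lebesgue"
        using vm wm Km by measurable
      show "AE x in lebesgue. norm (indicator K x *\<^sub>R (v x - w x)\<^sup>2)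
          \<le> norm (2 * (indicator K x *\<^sub>R (v x)\<^sup>2) + 2 * (indicator K x *\<^sub>R (w x)\<^sup>2))"
      proof (intro AE_I2)
        fix x
        have "(v x - w x)\<^sup>2 \<le> 2 * (v x)\<^sup>2 + 2 * (w x)\<^sup>2" by (rule sq_diff_le)
        then show "norm (indicator K x *\<^sub>R (v x - w x)\<^sup>2)
          \<le> norm (2 * (indicator K x *\<^sub>R (v x)\<^sup>2) + 2 * (indicator K x *\<^sub>R (w x)\<^sup>2))"
          by (auto simp: indicator_def)
      qed
    qed
    then show "set_integrable lebesgue K (\<lambda>x. (v x - w x)\<^sup>2)" unfolding set_integrable_def .
  qed
  have bdd: "bdd_above ((\<lambda>\<phi>. l2norm (\<lambda>x. \<phi> x * (v x - w x))) ` Bset f0)"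
  proof (rule bdd_aboveI2)
    fix \<phi> assume "\<phi> \<in> Bset f0"
    then obtain m where m: "\<phi> = (\<lambda>x. f0 (x - latt m))" using Bset_latt by blast
    define Q where "Q = 2 * (uloc_norm f0 v)\<^sup>2 + 2 * (uloc_norm f0 w)\<^sup>2"
    have "ennreal ((l2norm (\<lambda>x. f0 (x - latt m) * (v x - w x)))\<^sup>2)
        = (\<integral>\<^sup>+ x. ennreal ((f0 (x - latt m) * (v x - w x))\<^sup>2) \<partial>lebesgue)"
      using l2_local(1)[OF dl f0m bd zero] by simp
    also have "\<dots> \<le> (\<integral>\<^sup>+ x. 2 * ennreal ((f0 (x - latt m) * v x)\<^sup>2) + 2 * ennreal ((f0 (x - latt m) * w x)\<^sup>2) \<partial>lebesgue)"
    proof (intro nn_integral_mono)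
      fix x
      have "(f0 (x - latt m) * (v x - w x))\<^sup>2 \<le> 2 * (f0 (x - latt m) * v x)\<^sup>2 + 2 * (f0 (x - latt m) * w x)\<^sup>2"
        using sq_diff_le[of "f0 (x - latt m) * v x" "f0 (x - latt m) * w x"] by (simp add: right_diff_distrib)
      then show "ennreal ((f0 (x - latt m) * (v x - w x))\<^sup>2) \<le> 2 * ennreal ((f0 (x - latt m) * v x)\<^sup>2) + 2 * ennreal ((f0 (x - latt m) * w x)\<^sup>2)"
      proof -
        assume h: "(f0 (x - latt m) * (v x - w x))\<^sup>2 \<le> 2 * (f0 (x - latt m) * v x)\<^sup>2 + 2 * (f0 (x - latt m) * w x)\<^sup>2"
        have "ennreal ((f0 (x - latt m) * (v x - w x))\<^sup>2) \<le> ennreal (2 * (f0 (x - latt m) * v x)\<^sup>2 + 2 * (f0 (x - latt m) * w x)\<^sup>2)"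
          using h by (rule ennreal_leI)
        also have "\<dots> = 2 * ennreal ((f0 (x - latt m) * v x)\<^sup>2) + 2 * ennreal ((f0 (x - latt m) * w x)\<^sup>2)"
          by (simp add: ennreal_plus ennreal_mult)
        finally show ?thesis .
      qed
    qed
    also have "\<dots> = 2 * (\<integral>\<^sup>+ x. ennreal ((f0 (x - latt m) * v x)\<^sup>2) \<partial>lebesgue) + 2 * (\<integral>\<^sup>+ x. ennreal ((f0 (x - latt m) * w x)\<^sup>2) \<partial>lebesgue)"
    proof -
      note [measurable] = f0m
      have f0m': "(\<lambda>x. f0 (x - latt m)) \<in> borel_measurable lebesgue"
        by (intro measurable_completion) measurable
      show ?thesis using f0m' vm wm
        by (subst nn_integral_add) (auto simp: nn_integral_cmult)
    qed
    also have "\<dots> \<le> 2 * ennreal ((uloc_norm f0 v)\<^sup>2) + 2 * ennreal ((uloc_norm f0 w)\<^sup>2)"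
      using uloc_bound[OF v f0m bd zero, of m] uloc_bound[OF w f0m bd zero, of m]
      by (intro add_mono mult_left_mono) auto
    also have "\<dots> = ennreal Q" unfolding Q_def by (simp add: ennreal_plus ennreal_mult)
    finally have "(l2norm (\<lambda>x. f0 (x - latt m) * (v x - w x)))\<^sup>2 \<le> Q"
      by (subst (asm) ennreal_le_iff) (auto simp: Q_def)
    then have "l2norm (\<lambda>x. f0 (x - latt m) * (v x - w x)) \<le> sqrt Q"
      by (metis real_le_rsqrt)
    then show "l2norm (\<lambda>x. \<phi> x * (v x - w x)) \<le> sqrt Q" using m by simp
  qed
  show ?thesis using dl bdd unfolding L2uloc_def by simp
qed


lemma compact_int:
  fixes f0 F :: "real^2 \<Rightarrow> real"
  assumes one: "\<forall>x. norm x \<le> 2 \<longrightarrow> f0 x = 1" and f0m: "f0 \<in> borel_measurable borel"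
    and Fm: "F \<in> borel_measurable lebesgue"
    and fin: "\<And>m. (\<integral>\<^sup>+ x. ennreal ((f0 (x - latt m))\<^sup>2) * (ennreal \<bar>F x\<bar>)^2 \<partial>lebesgue) < \<infinity>"
    and K: "compact K"
  shows "set_integrable lebesgue K (\<lambda>x. (F x)\<^sup>2)"
proof -
  note [measurable] = f0m
  have f0m': "(\<lambda>x. f0 (x - c)) \<in> borel_measurable lebesgue" for c
    by (intro measurable_completion) measurable
  obtain R where R: "\<forall>x\<in>K. norm x \<le> R" using compact_imp_bounded[OF K] bounded_iff by blast
  define N :: int where "N = \<lceil>R\<rceil> + 1"
  define MS where "MS = {-N..N} \<times> {-N..N}"
  have MSf: "finite MS" unfolding MS_def by simp
  have Km: "K \<in> sets lebesgue"
    using K by (intro sets_completionI_sets) (simp add: compact_imp_closed borel_closed)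
  have pt: "ennreal (norm (indicator K x *\<^sub>R (F x)\<^sup>2))
      \<le> (\<Sum>m\<in>MS. ennreal ((f0 (x - latt m))\<^sup>2) * (ennreal \<bar>F x\<bar>)^2)" for x
  proof (cases "x \<in> K")
    case False then show ?thesis by simp
  next
    case True
    define m0 where "m0 = (\<lfloor>x$1\<rfloor>, \<lfloor>x$2\<rfloor>)"
    have "\<bar>x$1\<bar> \<le> R" "\<bar>x$2\<bar> \<le> R"
      using R True component_le_norm_cart[of x 1] component_le_norm_cart[of x 2] by force+
    then have "m0 \<in> MS" unfolding m0_def MS_def N_def by (auto, linarith+)
    moreover have "f0 (x - latt m0) = 1" using one near_latt[of x] unfolding m0_def by simp
    ultimately have "ennreal ((f0 (x - latt m0))\<^sup>2) * (ennreal \<bar>F x\<bar>)^2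
        \<le> (\<Sum>m\<in>MS. ennreal ((f0 (x - latt m))\<^sup>2) * (ennreal \<bar>F x\<bar>)^2)"
      using MSf by (intro member_le_sum) auto
    moreover have "ennreal (norm (indicator K x *\<^sub>R (F x)\<^sup>2)) = ennreal ((f0 (x - latt m0))\<^sup>2) * (ennreal \<bar>F x\<bar>)^2"
      using True \<open>f0 (x - latt m0) = 1\<close> by (simp add: ennreal_power)
    ultimately show ?thesis by simp
  qed
  have "(\<integral>\<^sup>+ x. ennreal (norm (indicator K x *\<^sub>R (F x)\<^sup>2)) \<partial>lebesgue)
      \<le> (\<integral>\<^sup>+ x. (\<Sum>m\<in>MS. ennreal ((f0 (x - latt m))\<^sup>2) * (ennreal \<bar>F x\<bar>)^2) \<partial>lebesgue)"
    by (intro nn_integral_mono pt)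
  also have "\<dots> = (\<Sum>m\<in>MS. (\<integral>\<^sup>+ x. ennreal ((f0 (x - latt m))\<^sup>2) * (ennreal \<bar>F x\<bar>)^2 \<partial>lebesgue))"
  proof (intro nn_integral_sum)
    fix m
    have a: "(\<lambda>x. f0 (x - latt m)) \<in> borel_measurable lebesgue" by (rule f0m')
    show "(\<lambda>x. ennreal ((f0 (x - latt m))\<^sup>2) * (ennreal \<bar>F x\<bar>)^2) \<in> borel_measurable lebesgue"
      using a Fm by measurable
  qed
  also have "\<dots> < \<infinity>" using fin MSf by (simp add: ennreal_sum_less_top)
  finally have "(\<integral>\<^sup>+ x. ennreal (norm (indicator K x *\<^sub>R (F x)\<^sup>2)) \<partial>lebesgue) < \<infinity>" .
  moreover have "(\<lambda>x. indicator K x *\<^sub>R (F x)\<^sup>2) \<in> borel_measurable lebesgue"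
    using Fm Km by measurable
  ultimately show ?thesis unfolding set_integrable_def
    by (intro integrableI_bounded) auto
qed


lemma K_meas:
  fixes f0 w :: "real^2 \<Rightarrow> real"
  assumes f0m: "f0 \<in> borel_measurable borel" and wm: "w \<in> borel_measurable lebesgue"
  shows "(\<lambda>y. (f0 (x - k) - f0 (y - k)) * w y / norm (x - y) powr (2+s)) \<in> borel_measurable lebesgue"
proof -
  note [measurable] = f0m
  have a: "(\<lambda>y. f0 (x - k) - f0 (y - k)) \<in> borel_measurable lebesgue"
    by (intro measurable_completion) measurable
  have b: "(\<lambda>y. norm (x - y) powr (2+s)) \<in> borel_measurable lebesgue"
    by (intro measurable_completion) measurable
  show ?thesis using a b wm by measurable
qed

lemma int_K:
  fixes f0 w w' :: "real^2 \<Rightarrow> real"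
  assumes lip: "\<forall>x y. \<bar>f0 x - f0 y\<bar> \<le> B * norm (x - y)" and B: "B \<ge> 0"
    and bd: "\<forall>x. 0 \<le> f0 x \<and> f0 x \<le> 1" and s: "s > 0"
    and f0m: "f0 \<in> borel_measurable borel" and wm: "w \<in> borel_measurable lebesgue"
    and ae: "AE y in lebesgue. w y = w' y"
    and J: "(\<integral>\<^sup>+ y. ennreal (gk B s (x - y) * \<bar>w' y\<bar>) \<partial>lborel) < \<infinity>"
  shows "integrable lebesgue (\<lambda>y. (f0 (x - k) - f0 (y - k)) * w y / norm (x - y) powr (2+s))"
proof (rule integrableI_bounded)
  show "(\<lambda>y. (f0 (x - k) - f0 (y - k)) * w y / norm (x - y) powr (2+s)) \<in> borel_measurable lebesgue"
    by (rule K_meas[OF f0m wm])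
  have "(\<integral>\<^sup>+ y. ennreal (norm ((f0 (x - k) - f0 (y - k)) * w y / norm (x - y) powr (2+s))) \<partial>lebesgue)
      \<le> (\<integral>\<^sup>+ y. ennreal (gk B s (x - y) * \<bar>w y\<bar>) \<partial>lebesgue)"
    using kern_bound[OF lip B bd s] by (intro nn_integral_mono ennreal_leI) simp
  also have "\<dots> = (\<integral>\<^sup>+ y. ennreal (gk B s (x - y) * \<bar>w' y\<bar>) \<partial>lebesgue)"
    using ae by (intro nn_integral_cong_AE) auto
  also have "\<dots> = (\<integral>\<^sup>+ y. ennreal (gk B s (x - y) * \<bar>w' y\<bar>) \<partial>lborel)"
    by (rule nn_integral_completion)
  finally show "(\<integral>\<^sup>+ y. ennreal (norm ((f0 (x - k) - f0 (y - k)) * w y / norm (x - y) powr (2+s))) \<partial>lebesgue) < \<infinity>"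
    using J by (simp add: le_less_trans)
qed

lemma borel_rep:
  fixes f0 w :: "real^2 \<Rightarrow> real"
  assumes w: "w \<in> L2uloc f0" and f0m: "f0 \<in> borel_measurable borel"
    and bd: "\<forall>x. 0 \<le> f0 x \<and> f0 x \<le> 1" and zero: "\<forall>x. norm x \<ge> 3 \<longrightarrow> f0 x = 0"
  shows "\<exists>w'. w' \<in> borel_measurable borel \<and> (AE y in lebesgue. w y = w' y) \<and>
     (\<forall>m. (\<integral>\<^sup>+ y. ennreal ((f0 (y - latt m))\<^sup>2 * (w' y)\<^sup>2) \<partial>lborel) \<le> ennreal ((uloc_norm f0 w)\<^sup>2))"
proof -
  have "w \<in> borel_measurable lebesgue" using w unfolding L2uloc_def L2loc_def by auto
  from completion_ex_borel_measurable_real[OF this]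
  obtain w' where w'm: "w' \<in> borel_measurable lborel" and ae0: "AE y in lborel. w y = w' y"
    by blast
  have ae: "AE y in lebesgue. w y = w' y" using ae0 by (rule AE_completion)
  have w'b: "w' \<in> borel_measurable borel" using w'm by simp
  have "(\<integral>\<^sup>+ y. ennreal ((f0 (y - latt m))\<^sup>2 * (w' y)\<^sup>2) \<partial>lborel) \<le> ennreal ((uloc_norm f0 w)\<^sup>2)" for m
  proof -
    have "(\<integral>\<^sup>+ y. ennreal ((f0 (y - latt m))\<^sup>2 * (w' y)\<^sup>2) \<partial>lborel)
        = (\<integral>\<^sup>+ y. ennreal ((f0 (y - latt m))\<^sup>2 * (w' y)\<^sup>2) \<partial>lebesgue)"
      by (rule nn_integral_completion[symmetric])
    also have "\<dots> = (\<integral>\<^sup>+ y. ennreal ((f0 (y - latt m) * w y)\<^sup>2) \<partial>lebesgue)"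
      using ae by (intro nn_integral_cong_AE) (auto simp: power_mult_distrib)
    also have "\<dots> \<le> ennreal ((uloc_norm f0 w)\<^sup>2)" by (rule uloc_bound[OF w f0m bd zero])
    finally show ?thesis .
  qed
  then show ?thesis using w'b ae by blast
qed


lemma uloc_nonneg:
  assumes "w \<in> L2uloc f0"
  shows "uloc_norm f0 w \<ge> 0"
proof -
  have bdd: "bdd_above ((\<lambda>\<phi>. l2norm (\<lambda>x. \<phi> x * w x)) ` Bset f0)"
    using assms unfolding L2uloc_def by auto
  have "0 \<le> l2norm (\<lambda>x. f0 (x - latt (0,0)) * w x)" by (simp add: l2norm_def)
  also have "\<dots> \<le> uloc_norm f0 w"
    unfolding uloc_norm_def using bdd latt_in_Bset[of f0 "(0,0)"] by (rule cSUP_upper2) simp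
  finally show ?thesis .
qed

theorem lemma3:
  fixes \<phi>0 \<phi> :: "real^2 \<Rightarrow> real" and s :: real
  assumes "smooth2 \<phi>0"
    and "\<forall>x. 0 \<le> \<phi>0 x \<and> \<phi>0 x \<le> 1"
    and "\<forall>x. norm x \<le> 2 \<longrightarrow> \<phi>0 x = 1"
    and "\<forall>x. norm x \<ge> 3 \<longrightarrow> \<phi>0 x = 0"
    and "0 < s" and "s < 1"
    and "\<phi> \<in> Bset \<phi>0"
  shows "(\<forall>w\<in>L2uloc \<phi>0. Tcomm s \<phi> w \<in> L2uloc \<phi>0) \<and>
         (\<forall>w\<in>L2uloc \<phi>0. \<forall>\<epsilon>>0. \<exists>\<delta>>0. \<forall>v\<in>L2uloc \<phi>0.
            uloc_norm \<phi>0 (\<lambda>x. v x - w x) < \<delta> \<longrightarrow>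
            uloc_norm \<phi>0 (\<lambda>x. Tcomm s \<phi> v x - Tcomm s \<phi> w x) < \<epsilon>)"
proof -
  note sm = assms(1) and bd = assms(2) and one = assms(3) and zero = assms(4)
    and s0 = assms(5) and s1 = assms(6) and phB = assms(7)
  obtain B where B0: "B \<ge> 0" and lip: "\<forall>x y. \<bar>\<phi>0 x - \<phi>0 y\<bar> \<le> B * norm (x - y)"
    using phi0_lip[OF sm zero] by blast
  have f0m: "\<phi>0 \<in> borel_measurable borel"
  proof -
    have "\<phi>0 differentiable_on UNIV" using sm[unfolded smooth2_def, rule_format, of "[]"] by simp
    then have "continuous_on UNIV \<phi>0" by (rule differentiable_imp_continuous_on)
    then show ?thesis by (rule borel_measurable_continuous_onI)
  qed
  note [measurable] = f0m
  obtain m\<phi> where phi: "\<phi> = (\<lambda>x. \<phi>0 (x - latt m\<phi>))" using Bset_latt[OF phB] by blast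
  define c where "c = frac_const s"
  define Kr where "Kr = enn2real (KC B s)"
  have KCe: "KC B s = ennreal Kr" using KC_finite[OF B0 s0 s1] by (simp add: Kr_def ennreal_enn2real)
  have Kr0: "Kr \<ge> 0" by (simp add: Kr_def)
  have est: "(\<integral>\<^sup>+ x. ennreal ((\<phi>0 (x - latt j))\<^sup>2) * (ennreal \<bar>F x\<bar>)^2 \<partial>lebesgue) \<le> ennreal (Kr * c\<^sup>2 * Ud\<^sup>2)"
    if d'm: "d' \<in> borel_measurable borel"
      and Ud: "\<forall>m. (\<integral>\<^sup>+ y. ennreal ((\<phi>0 (y - latt m))\<^sup>2 * (d' y)\<^sup>2) \<partial>lborel) \<le> ennreal (Ud\<^sup>2)"
      and FB: "AE x in lebesgue. ennreal \<bar>F x\<bar> \<le> (\<integral>\<^sup>+ y. ennreal (gk B s (x - y) * \<bar>c * d' y\<bar>) \<partial>lborel)"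
    for F d' Ud j
  proof -
    note [measurable] = d'm
    have U': "(\<integral>\<^sup>+ y. ennreal ((\<phi>0 (y - latt m))\<^sup>2 * (c * d' y)\<^sup>2) \<partial>lborel) \<le> ennreal (c\<^sup>2 * Ud\<^sup>2)" for m
    proof -
      have "(\<integral>\<^sup>+ y. ennreal ((\<phi>0 (y - latt m))\<^sup>2 * (c * d' y)\<^sup>2) \<partial>lborel)
          = (\<integral>\<^sup>+ y. ennreal (c\<^sup>2) * ennreal ((\<phi>0 (y - latt m))\<^sup>2 * (d' y)\<^sup>2) \<partial>lborel)"
        by (intro nn_integral_cong) (simp add: ennreal_mult[symmetric] power_mult_distrib mult_ac)
      also have "\<dots> = ennreal (c\<^sup>2) * (\<integral>\<^sup>+ y. ennreal ((\<phi>0 (y - latt m))\<^sup>2 * (d' y)\<^sup>2) \<partial>lborel)"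
        by (rule nn_integral_cmult) measurable
      also have "\<dots> \<le> ennreal (c\<^sup>2) * ennreal (Ud\<^sup>2)"
        by (intro mult_left_mono Ud[rule_format]) auto
      also have "\<dots> = ennreal (c\<^sup>2 * Ud\<^sup>2)" by (simp add: ennreal_mult)
      finally show ?thesis .
    qed
    have um: "(\<lambda>y. c * d' y) \<in> borel_measurable borel" by measurable
    have "(\<integral>\<^sup>+ x. ennreal ((\<phi>0 (x - latt j))\<^sup>2) * (ennreal \<bar>F x\<bar>)^2 \<partial>lebesgue) \<le> KC B s * ennreal (c\<^sup>2 * Ud\<^sup>2)"
      by (rule main_est[OF B0 s0 s1 one bd zero f0m um U' FB, of "latt j" j]) simp
    also have "\<dots> = ennreal (Kr * c\<^sup>2 * Ud\<^sup>2)"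
      unfolding KCe using Kr0 by (simp add: ennreal_mult mult.assoc)
    finally show ?thesis .
  qed
  have P1: "Tcomm s \<phi> w \<in> L2uloc \<phi>0" if w: "w \<in> L2uloc \<phi>0" for w
  proof -
    obtain w' where w'm: "w' \<in> borel_measurable borel" and ae: "AE y in lebesgue. w y = w' y"
      and Uw: "\<forall>m. (\<integral>\<^sup>+ y. ennreal ((\<phi>0 (y - latt m))\<^sup>2 * (w' y)\<^sup>2) \<partial>lborel) \<le> ennreal ((uloc_norm \<phi>0 w)\<^sup>2)"
      using borel_rep[OF w f0m bd zero] by blast
    have wm: "w \<in> borel_measurable lebesgue" using w unfolding L2uloc_def L2loc_def by auto
    have Tm: "Tcomm s \<phi> w \<in> borel_measurable lebesgue"
      unfolding phi by (rule T_meas[OF f0m wm ae w'm])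
    have FB: "AE x in lebesgue. ennreal \<bar>Tcomm s \<phi> w x\<bar> \<le> (\<integral>\<^sup>+ y. ennreal (gk B s (x - y) * \<bar>c * w' y\<bar>) \<partial>lborel)"
      unfolding phi c_def using T_pt[OF lip B0 bd s0 ae w'm] by simp
    have E: "(\<integral>\<^sup>+ x. ennreal ((\<phi>0 (x - latt j))\<^sup>2) * (ennreal \<bar>Tcomm s \<phi> w x\<bar>)^2 \<partial>lebesgue)
        \<le> ennreal (Kr * c\<^sup>2 * (uloc_norm \<phi>0 w)\<^sup>2)" for j
      by (rule est[OF w'm Uw FB])
    have fin: "(\<integral>\<^sup>+ x. ennreal ((\<phi>0 (x - latt j))\<^sup>2) * (ennreal \<bar>Tcomm s \<phi> w x\<bar>)^2 \<partial>lebesgue) < \<infinity>" for j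
      using E[of j] by (simp add: le_less_trans)
    have loc: "Tcomm s \<phi> w \<in> L2loc"
      unfolding L2loc_def using Tm compact_int[OF one f0m Tm fin] by blast
    have bdd: "bdd_above ((\<lambda>\<psi>. l2norm (\<lambda>x. \<psi> x * Tcomm s \<phi> w x)) ` Bset \<phi>0)"
    proof (rule bdd_aboveI2)
      fix \<psi> assume "\<psi> \<in> Bset \<phi>0"
      then obtain j where j: "\<psi> = (\<lambda>x. \<phi>0 (x - latt j))" using Bset_latt by blast
      show "l2norm (\<lambda>x. \<psi> x * Tcomm s \<phi> w x) \<le> sqrt (Kr * c\<^sup>2 * (uloc_norm \<phi>0 w)\<^sup>2)"
        unfolding j using Kr0 by (intro l2norm_bound[OF f0m Tm E]) simp
    qed
    show ?thesis using loc bdd unfolding L2uloc_def by simp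
  qed
  have P2: "\<exists>\<delta>>0. \<forall>v\<in>L2uloc \<phi>0. uloc_norm \<phi>0 (\<lambda>x. v x - w x) < \<delta> \<longrightarrow>
            uloc_norm \<phi>0 (\<lambda>x. Tcomm s \<phi> v x - Tcomm s \<phi> w x) < \<epsilon>"
    if w: "w \<in> L2uloc \<phi>0" and e: "\<epsilon> > 0" for w \<epsilon>
  proof -
    define A where "A = sqrt (Kr * c\<^sup>2)"
    have A0: "A \<ge> 0" using Kr0 by (simp add: A_def)
    define \<delta> where "\<delta> = \<epsilon> / (A + 1)"
    have d0: "\<delta> > 0" using e A0 by (simp add: \<delta>_def)
    show ?thesis
    proof (intro exI[of _ \<delta>] conjI d0 ballI impI)
      fix v assume v: "v \<in> L2uloc \<phi>0" and small: "uloc_norm \<phi>0 (\<lambda>x. v x - w x) < \<delta>"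
      define d where "d = (\<lambda>x. v x - w x)"
      have dL: "d \<in> L2uloc \<phi>0" unfolding d_def by (rule diff_L2uloc[OF v w f0m bd zero])
      obtain v' where v'm: "v' \<in> borel_measurable borel" and aev: "AE y in lebesgue. v y = v' y"
        and Uv: "\<forall>m. (\<integral>\<^sup>+ y. ennreal ((\<phi>0 (y - latt m))\<^sup>2 * (v' y)\<^sup>2) \<partial>lborel) \<le> ennreal ((uloc_norm \<phi>0 v)\<^sup>2)"
        using borel_rep[OF v f0m bd zero] by blast
      obtain w' where w'm: "w' \<in> borel_measurable borel" and aew: "AE y in lebesgue. w y = w' y"
        and Uw: "\<forall>m. (\<integral>\<^sup>+ y. ennreal ((\<phi>0 (y - latt m))\<^sup>2 * (w' y)\<^sup>2) \<partial>lborel) \<le> ennreal ((uloc_norm \<phi>0 w)\<^sup>2)"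
        using borel_rep[OF w f0m bd zero] by blast
      obtain d' where d'm: "d' \<in> borel_measurable borel" and aed: "AE y in lebesgue. d y = d' y"
        and Ud: "\<forall>m. (\<integral>\<^sup>+ y. ennreal ((\<phi>0 (y - latt m))\<^sup>2 * (d' y)\<^sup>2) \<partial>lborel) \<le> ennreal ((uloc_norm \<phi>0 d)\<^sup>2)"
        using borel_rep[OF dL f0m bd zero] by blast
      have vm: "v \<in> borel_measurable lebesgue" using v unfolding L2uloc_def L2loc_def by auto
      have wm: "w \<in> borel_measurable lebesgue" using w unfolding L2uloc_def L2loc_def by auto
      have Jv: "AE x in lebesgue. (\<integral>\<^sup>+ y. ennreal (gk B s (x - y) * \<bar>v' y\<bar>) \<partial>lborel) < \<infinity>"
        using J_fin[OF B0 s0 s1 one bd zero f0m v'm] Uv by blast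
      have Jw: "AE x in lebesgue. (\<integral>\<^sup>+ y. ennreal (gk B s (x - y) * \<bar>w' y\<bar>) \<partial>lborel) < \<infinity>"
        using J_fin[OF B0 s0 s1 one bd zero f0m w'm] Uw by blast
      have FB: "AE x in lebesgue. ennreal \<bar>Tcomm s \<phi> v x - Tcomm s \<phi> w x\<bar>
          \<le> (\<integral>\<^sup>+ y. ennreal (gk B s (x - y) * \<bar>c * d' y\<bar>) \<partial>lborel)"
        using Jv Jw
      proof eventually_elim
        case (elim x)
        define hv where "hv y = (\<phi>0 (x - latt m\<phi>) - \<phi>0 (y - latt m\<phi>)) * v y / norm (x - y) powr (2+s)" for y
        define hw where "hw y = (\<phi>0 (x - latt m\<phi>) - \<phi>0 (y - latt m\<phi>)) * w y / norm (x - y) powr (2+s)" for y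
        have iv: "integrable lebesgue hv"
          unfolding hv_def by (rule int_K[OF lip B0 bd s0 f0m vm aev elim(1)])
        have iw: "integrable lebesgue hw"
          unfolding hw_def by (rule int_K[OF lip B0 bd s0 f0m wm aew elim(2)])
        have "Tcomm s \<phi> v x - Tcomm s \<phi> w x = c * ((LINT y|lebesgue. hv y) - (LINT y|lebesgue. hw y))"
          unfolding phi Tcomm_def c_def hv_def hw_def by (simp add: right_diff_distrib)
        also have "(LINT y|lebesgue. hv y) - (LINT y|lebesgue. hw y) = (LINT y|lebesgue. hv y - hw y)"
          by (rule Bochner_Integration.integral_diff[OF iv iw, symmetric])
        also have "(\<lambda>y. hv y - hw y) = (\<lambda>y. (\<phi>0 (x - latt m\<phi>) - \<phi>0 (y - latt m\<phi>)) * d y / norm (x - y) powr (2+s))"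
          unfolding hv_def hw_def d_def by (simp add: fun_eq_iff diff_divide_distrib right_diff_distrib)
        finally have "Tcomm s \<phi> v x - Tcomm s \<phi> w x = Tcomm s \<phi> d x"
          unfolding phi Tcomm_def c_def by simp
        then show ?case
          using T_pt[OF lip B0 bd s0 aed d'm, where k="latt m\<phi>" and x=x] unfolding phi c_def by simp
      qed
      have Tvm: "Tcomm s \<phi> v \<in> borel_measurable lebesgue"
        unfolding phi by (rule T_meas[OF f0m vm aev v'm])
      have Twm: "Tcomm s \<phi> w \<in> borel_measurable lebesgue"
        unfolding phi by (rule T_meas[OF f0m wm aew w'm])
      have Fm: "(\<lambda>x. Tcomm s \<phi> v x - Tcomm s \<phi> w x) \<in> borel_measurable lebesgue"
        using Tvm Twm by measurable
      have Ud0: "uloc_norm \<phi>0 d \<ge> 0" by (rule uloc_nonneg[OF dL])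
      have each: "l2norm (\<lambda>x. \<psi> x * (Tcomm s \<phi> v x - Tcomm s \<phi> w x)) \<le> A * uloc_norm \<phi>0 d"
        if psi: "\<psi> \<in> Bset \<phi>0" for \<psi>
      proof -
        obtain j where j: "\<psi> = (\<lambda>x. \<phi>0 (x - latt j))" using Bset_latt[OF psi] by blast
        have "l2norm (\<lambda>x. \<phi>0 (x - latt j) * (Tcomm s \<phi> v x - Tcomm s \<phi> w x))
            \<le> sqrt (Kr * c\<^sup>2 * (uloc_norm \<phi>0 d)\<^sup>2)"
          using Kr0 by (intro l2norm_bound[OF f0m Fm est[OF d'm Ud FB]]) simp
        also have "\<dots> = A * uloc_norm \<phi>0 d"
          using Ud0 by (simp add: A_def real_sqrt_mult)
        finally show ?thesis unfolding j .
      qed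
      have "(SUP \<psi>\<in>Bset \<phi>0. l2norm (\<lambda>x. \<psi> x * (Tcomm s \<phi> v x - Tcomm s \<phi> w x))) \<le> A * uloc_norm \<phi>0 d"
        using phB each by (intro cSUP_least) auto
      then have "uloc_norm \<phi>0 (\<lambda>x. Tcomm s \<phi> v x - Tcomm s \<phi> w x) \<le> A * uloc_norm \<phi>0 d"
        by (simp only: uloc_norm_def[of \<phi>0 "\<lambda>x. Tcomm s \<phi> v x - Tcomm s \<phi> w x"])
      also have "\<dots> \<le> (A + 1) * uloc_norm \<phi>0 d" using Ud0 by (simp add: distrib_right)
      also have "\<dots> < (A + 1) * \<delta>" using small A0 unfolding d_def by simp
      also have "\<dots> = \<epsilon>" using A0 by (simp add: \<delta>_def)
      finally show "uloc_norm \<phi>0 (\<lambda>x. Tcomm s \<phi> v x - Tcomm s \<phi> w x) < \<epsilon>" .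
    qed
  qed
  show ?thesis using P1 P2 by blast
qed


end
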